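(* Let $K\in\mathbb{K}$, $\Psi_i=R_i+B_i^T\mathcal{E}_i(P^K)B_i$, and $K'=K-2\eta\Psi^{-1}L^K$ (i.e. $K_i'=K_i-2\eta\Psi_i^{-1}L_i^K$) with $0<\eta\le\frac12$. Then $$C(K')-C(K^* )\le\Big(1-\frac{2\mu}{\|\mathbf{X}^{K^*}\|_{\max}}\eta\Big)\big(C(K)-C(K^* )\big).$$
   Context: Let $N_s\ge 1$, $\Omega=\{1,\dots,N_s\}$; tuples $V=(V_1,\dots,V_{N_s})$ of matrices are combined componentwise, $\|V\|_{\max}=\max_i\|V_i\|$ (spectral norm). Markovian jump linear system: $x_{t+1}=A_{\omega(t)}x_t+B_{\omega(t)}u_t$, $A_i\in\mathbb{R}^{d\times d}$, $B_i\in\mathbb{R}^{d\times k}$; $\{\omega(t)\}$ is a time-homogeneous Markov chain on $\Omega$ with transition probabilities $p_{ij}$ and initial distribution $\pi$ with $\pi_i>0$; $x_0$ is random, independent of the chain, with $\mathbb{E}[x_0x_0^T]\succ0$. The system is mean-square stabilizable. $Q=(Q_i)\succ0$, $R=(R_i)\succ0$. For $K=(K_i)$, $K_i\in\mathbb{R}^{k\times d}$, $u_t=-K_{\omega(t)}x_t$ and $C(K)=\mathbb{E}[\sum_{t\ge0}x_t^TQ_{\omega(t)}x_t+u_t^TR_{\omega(t)}u_t]$. $\mathbb{K}$ is the set of $K$ making the closed loop $x_{t+1}=\Gamma_{\omega(t)}x_t$, $\Gamma_i=A_i-B_iK_i$, mean-square stable (equivalently $C(K)<\infty$). $K^*$ is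 the optimal gain minimizing $C$ over $\mathbb{K}$. $\mathcal{E}_i(V)=\sum_jp_{ij}V_j$; $\mathcal{T}_j(V)=\sum_ip_{ij}\Gamma_iV_i\Gamma_i^T$. For $K\in\mathbb{K}$: $P^K$ solves $P_i^K=Q_i+K_i^TR_iK_i+\Gamma_i^T\mathcal{E}_i(P^K)\Gamma_i$; $L_i^K=(R_i+B_i^T\mathcal{E}_i(P^K)B_i)K_i-B_i^T\mathcal{E}_i(P^K)A_i$; $X_i(0)=\mathbb{E}[x_0x_0^T\mathbf{1}\{\omega(0)=i\}]$, $\mathbf{X}^K=\sum_{t\ge0}\mathcal{T}^t(X(0))$. $\mu=\min_i\pi_i\,\sigma_{\min}(\mathbb{E}[x_0x_0^T])$. *)

theory Defs
  imports "HOL-Analysis.Analysis" "HOL-Probability.Probability"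
begin

(* Modes: a finite type 's (Omega = {1..N_s}, N_s >= 1). State dim 'd, input dim 'k.
   Tuples V = (V_i) are functions 's => matrix. *)

definition posdef :: "real^'n^'n \<Rightarrow> bool" where
  "posdef S \<longleftrightarrow> transpose S = S \<and> (\<forall>v. v \<noteq> 0 \<longrightarrow> v \<bullet> (S *v v) > 0)"

definition specnorm :: "real^'n^'m \<Rightarrow> real" where
  "specnorm S = onorm (\<lambda>v. S *v v)"

definition sigma_min :: "real^'n^'m \<Rightarrow> real" where
  "sigma_min S = Inf {norm (S *v v) | v. norm v = 1}"

definition maxnorm :: "('s::finite \<Rightarrow> real^'n^'m) \<Rightarrow> real" where
  "maxnorm V = Max (range (\<lambda>i. specnorm (V i)))"

definition Gam :: "('s \<Rightarrow> real^'d^'d) \<Rightarrow> ('s \<Rightarrow> real^'k^'d) \<Rightarrow> ('s \<Rightarrow> real^'d^'k)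
    \<Rightarrow> 's \<Rightarrow> real^'d^'d" where
  "Gam A B K i = A i - B i ** K i"

definition Eop :: "('s::finite \<Rightarrow> 's \<Rightarrow> real) \<Rightarrow> ('s \<Rightarrow> real^'d^'d) \<Rightarrow> 's \<Rightarrow> real^'d^'d" where
  "Eop p V i = (\<Sum>j\<in>UNIV. p i j *\<^sub>R V j)"

definition Top :: "('s::finite \<Rightarrow> 's \<Rightarrow> real) \<Rightarrow> ('s \<Rightarrow> real^'d^'d) \<Rightarrow> ('s \<Rightarrow> real^'d^'d)
    \<Rightarrow> 's \<Rightarrow> real^'d^'d" where
  "Top p G V j = (\<Sum>i\<in>UNIV. p i j *\<^sub>R (G i ** V i ** transpose (G i)))"

definition paths :: "nat \<Rightarrow> ('s::finite) list set" where
  "paths t = {ws. length ws = Suc t}"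

definition path_weight :: "('s \<Rightarrow> 's \<Rightarrow> real) \<Rightarrow> ('s \<Rightarrow> real) \<Rightarrow> 's list \<Rightarrow> real" where
  "path_weight p d ws = d (ws ! 0) * (\<Prod>s<length ws - 1. p (ws ! s) (ws ! Suc s))"

primrec traj :: "('s \<Rightarrow> real^'d^'d) \<Rightarrow> 's list \<Rightarrow> real^'d \<Rightarrow> nat \<Rightarrow> real^'d" where
  "traj G ws x 0 = x"
| "traj G ws x (Suc n) = G (ws ! n) *v traj G ws x n"

definition ms_stable :: "('s::finite \<Rightarrow> 's \<Rightarrow> real) \<Rightarrow> ('s \<Rightarrow> real^'d^'d) \<Rightarrow> bool" where
  "ms_stable p G \<longleftrightarrow> (\<forall>d x. (\<forall>i. d i \<ge> 0) \<and> sum d UNIV = 1 \<longrightarrow>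
      (\<lambda>t. \<Sum>ws\<in>paths t. path_weight p d ws * (norm (traj G ws x t))\<^sup>2) \<longlonglongrightarrow> 0)"

definition stab_set :: "('s::finite \<Rightarrow> 's \<Rightarrow> real) \<Rightarrow> ('s \<Rightarrow> real^'d^'d) \<Rightarrow> ('s \<Rightarrow> real^'k^'d)
    \<Rightarrow> ('s \<Rightarrow> real^'d^'k) set" where
  "stab_set p A B = {K. ms_stable p (Gam A B K)}"

(* cost C(K) = E[sum_t x_t^T Q x_t + u_t^T R u_t], u_t = -K x_t; the expectation is over the
   Markov chain (initial law pini, transitions p) and the independent random x0 on (M). *)
definition mjls_cost :: "'a measure \<Rightarrow> ('a \<Rightarrow> real^'d) \<Rightarrow> ('s::finite \<Rightarrow> real) \<Rightarrow> ('s \<Rightarrow> 's \<Rightarrow> real)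
   \<Rightarrow> ('s \<Rightarrow> real^'d^'d) \<Rightarrow> ('s \<Rightarrow> real^'k^'d) \<Rightarrow> ('s \<Rightarrow> real^'d^'d) \<Rightarrow> ('s \<Rightarrow> real^'k^'k)
   \<Rightarrow> ('s \<Rightarrow> real^'d^'k) \<Rightarrow> ereal" where
  "mjls_cost M x0 pini p A B Q R K =
     (\<Sum>t. ereal (\<Sum>ws\<in>paths t. path_weight p pini ws *
        (\<integral>w. (let x = traj (Gam A B K) ws (x0 w) t; u = - (K (ws ! t) *v x)
               in x \<bullet> (Q (ws ! t) *v x) + u \<bullet> (R (ws ! t) *v u)) \<partial>M)))"

definition PK :: "('s::finite \<Rightarrow> 's \<Rightarrow> real) \<Rightarrow> ('s \<Rightarrow> real^'d^'d) \<Rightarrow> ('s \<Rightarrow> real^'k^'d)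
   \<Rightarrow> ('s \<Rightarrow> real^'d^'d) \<Rightarrow> ('s \<Rightarrow> real^'k^'k) \<Rightarrow> ('s \<Rightarrow> real^'d^'k) \<Rightarrow> 's \<Rightarrow> real^'d^'d" where
  "PK p A B Q R K = (THE P. \<forall>i. P i = Q i + transpose (K i) ** R i ** K i
        + transpose (Gam A B K i) ** Eop p P i ** Gam A B K i)"

definition LK :: "('s::finite \<Rightarrow> 's \<Rightarrow> real) \<Rightarrow> ('s \<Rightarrow> real^'d^'d) \<Rightarrow> ('s \<Rightarrow> real^'k^'d)
   \<Rightarrow> ('s \<Rightarrow> real^'d^'d) \<Rightarrow> ('s \<Rightarrow> real^'k^'k) \<Rightarrow> ('s \<Rightarrow> real^'d^'k) \<Rightarrow> 's \<Rightarrow> real^'d^'k" where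
  "LK p A B Q R K i = (let EP = Eop p (PK p A B Q R K) i in
      (R i + transpose (B i) ** EP ** B i) ** K i - transpose (B i) ** EP ** A i)"

definition second_moment :: "'a measure \<Rightarrow> ('a \<Rightarrow> real^'d) \<Rightarrow> real^'d^'d" where
  "second_moment M x0 = (\<chi> i j. \<integral>w. x0 w $ i * x0 w $ j \<partial>M)"

(* X_i(0) = E[x0 x0^T 1{omega(0)=i}] = pi_i E[x0 x0^T]  (x0 independent of the chain) *)
definition X0 :: "'a measure \<Rightarrow> ('a \<Rightarrow> real^'d) \<Rightarrow> ('s \<Rightarrow> real) \<Rightarrow> 's \<Rightarrow> real^'d^'d" where
  "X0 M x0 pini i = pini i *\<^sub>R second_moment M x0"

definition XK :: "'a measure \<Rightarrow> ('a \<Rightarrow> real^'d) \<Rightarrow> ('s::finite \<Rightarrow> real) \<Rightarrow> ('s \<Rightarrow> 's \<Rightarrow> real)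
   \<Rightarrow> ('s \<Rightarrow> real^'d^'d) \<Rightarrow> ('s \<Rightarrow> real^'k^'d) \<Rightarrow> ('s \<Rightarrow> real^'d^'k) \<Rightarrow> 's \<Rightarrow> real^'d^'d" where
  "XK M x0 pini p A B K i = (\<Sum>t. ((Top p (Gam A B K) ^^ t) (X0 M x0 pini)) i)"

definition mu_const :: "'a measure \<Rightarrow> ('a \<Rightarrow> real^'d) \<Rightarrow> ('s::finite \<Rightarrow> real) \<Rightarrow> real" where
  "mu_const M x0 pini = Min (range pini) * sigma_min (second_moment M x0)"

end

theory Submission
  imports Defs
begin


definition frob :: "real^'n^'m \<Rightarrow> real^'n^'m \<Rightarrow> real" where
  "frob X Y = (\<Sum>a\<in>UNIV. \<Sum>b\<in>UNIV. X$a$b * Y$a$b)"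

definition outer :: "real^'n \<Rightarrow> real^'n \<Rightarrow> real^'n^'n" where
  "outer u v = (\<chi> a b. u$a * v$b)"

definition psdq :: "real^'n^'n \<Rightarrow> bool" where
  "psdq S \<longleftrightarrow> (\<forall>x. 0 \<le> x \<bullet> (S *v x))"

definition symm :: "real^'n^'n \<Rightarrow> bool" where
  "symm S \<longleftrightarrow> transpose S = S"

lemma dot_mv_transpose: "(x::real^'m) \<bullet> (A *v y) = (transpose A *v x) \<bullet> y"
  by (simp add: dot_lmul_matrix)

lemma symm_swap: "symm S \<Longrightarrow> (x::real^'n) \<bullet> (S *v y) = y \<bullet> (S *v x)"
  unfolding symm_def by (metis dot_mv_transpose inner_commute)

lemma psd_zero:
  fixes B :: "real^'n^'n"
  assumes "symm B" "psdq B" "v \<bullet> (B *v v) = 0"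
  shows "B *v v = 0"
proof -
  have key: "w \<bullet> (B *v v) = 0" for w
  proof -
    define a where "a = w \<bullet> (B *v v)"
    define b where "b = w \<bullet> (B *v w)"
    have b0: "b \<ge> 0" using assms(2) unfolding psdq_def b_def by auto
    define t where "t = - a / (b + 1)"
    have "0 \<le> (v + t *\<^sub>R w) \<bullet> (B *v (v + t *\<^sub>R w))" using assms(2) unfolding psdq_def by auto
    also have "\<dots> = v \<bullet> (B *v v) + t * (v \<bullet> (B *v w)) + t * (w \<bullet> (B *v v)) + t * t * (w \<bullet> (B *v w))"
      by (simp add: matrix_vector_right_distrib matrix_vector_mult_scaleR inner_add_left inner_add_right algebra_simps)
    also have "\<dots> = 2 * t * a + t * t * b"
      using assms(3) symm_swap[OF assms(1), of v w] unfolding a_def b_def by simp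
    finally have h: "0 \<le> 2 * t * a + t * t * b" .
    have e: "(b+1)*t = -a" unfolding t_def using b0 by simp
    have h2: "0 \<le> (b+1)*(b+1)*(2*t*a + t*t*b)" using h b0 by simp
    have "(b+1)*(b+1)*(2*t*a + t*t*b) = 2*((b+1)*t)*(b+1)*a + ((b+1)*t)*((b+1)*t)*b"
      by (simp add: algebra_simps)
    also have "\<dots> = a * a * (- b - 2)" unfolding e by (simp add: algebra_simps)
    finally have "0 \<le> a * a * (- b - 2)" using h2 by simp
    hence "a * a * (b + 2) \<le> 0" by (simp add: algebra_simps)
    hence "a * a \<le> 0" using b0 by (simp add: mult_le_0_iff)
    thus ?thesis unfolding a_def by (simp add: mult_le_0_iff) linarith
  qed
  from key[of "B *v v"] show ?thesis by simp
qed

lemma unit_exists: "\<exists>v::real^'n. norm v = 1"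
  by (rule exI[of _ "axis undefined 1"]) simp

lemma min_eig:
  fixes S :: "real^'n^'n"
  assumes "symm S"
  shows "\<exists>v. norm v = 1 \<and> S *v v = (v \<bullet> (S *v v)) *\<^sub>R v \<and> (\<forall>w. (v \<bullet> (S *v v)) * (w \<bullet> w) \<le> w \<bullet> (S *v w))"
proof -
  have "continuous_on (sphere 0 1) (\<lambda>v::real^'n. v \<bullet> (S *v v))"
    by (intro continuous_intros)
  moreover have "sphere (0::real^'n) 1 \<noteq> {}" using unit_exists by auto
  ultimately obtain v where v: "v \<in> sphere 0 1" and vmin: "\<forall>y\<in>sphere 0 1. v \<bullet> (S *v v) \<le> y \<bullet> (S *v y)"
    using continuous_attains_inf[of "sphere (0::real^'n) 1"] compact_sphere by blast
  define l where "l = v \<bullet> (S *v v)"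
  have nv: "norm v = 1" using v by simp
  have bound: "l * (w \<bullet> w) \<le> w \<bullet> (S *v w)" for w
  proof (cases "w = 0")
    case True then show ?thesis by simp
  next
    case False
    define u where "u = (1 / norm w) *\<^sub>R w"
    have "u \<in> sphere 0 1" using False unfolding u_def by simp
    hence "l \<le> u \<bullet> (S *v u)" using vmin unfolding l_def by blast
    also have "u \<bullet> (S *v u) = (w \<bullet> (S *v w)) / (norm w)^2"
      unfolding u_def by (simp add: matrix_vector_mult_scaleR power2_eq_square)
    finally have "l * (norm w)^2 \<le> w \<bullet> (S *v w)" using False by (simp add: field_simps)
    thus ?thesis by (simp add: power2_norm_eq_inner)
  qed
  define Bm where "Bm = S - l *\<^sub>R mat 1"
  have sB: "symm Bm" using assms unfolding Bm_def symm_def by (simp add: transpose_def vec_eq_iff mat_def)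
  have Bv: "Bm *v w = S *v w - l *\<^sub>R w" for w
    unfolding Bm_def by (simp add: matrix_vector_mult_diff_rdistrib scaleR_matrix_vector_assoc[symmetric])
  have pB: "psdq Bm" unfolding psdq_def Bv using bound by (simp add: inner_diff_right)
  have "v \<bullet> (Bm *v v) = 0" unfolding Bv l_def using nv by (simp add: inner_diff_right power2_norm_eq_inner[symmetric])
  from psd_zero[OF sB pB this] have "S *v v = l *\<^sub>R v" unfolding Bv by simp
  with nv bound show ?thesis unfolding l_def by blast
qed


lemma outer_mv: "outer u v *v x = (v \<bullet> x) *\<^sub>R u"
  by (simp add: outer_def matrix_vector_mult_def inner_vec_def vec_eq_iff sum_distrib_left mult_ac)

lemma transpose_outer: "transpose (outer u u) = outer u u"
  by (simp add: outer_def transpose_def vec_eq_iff mult.commute)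

lemma subspace_range_mv: "subspace (range (\<lambda>x. (S::real^'n^'m) *v x))"
  unfolding subspace_def
  apply (intro conjI ballI allI)
    apply (rule range_eqI[of _ _ 0], simp)
   apply (auto simp: matrix_vector_right_distrib[symmetric] matrix_vector_mult_scaleR[symmetric] intro: range_eqI)
  done

lemma decomp_aux:
  fixes S :: "real^'n^'n"
  shows "dim (range (\<lambda>x. S *v x)) = n \<Longrightarrow> symm S \<Longrightarrow> psdq S \<Longrightarrow> \<exists>ms. S = sum_list (map (\<lambda>m. outer m m) ms)"
proof (induction n arbitrary: S rule: less_induct)
  case (less n S)
  show ?case
  proof (cases "S = 0")
    case True then show ?thesis by (intro exI[of _ "[]"]) simp
  next
    case False
    have sS: "symm S" and pS: "psdq S" using less by auto
    have "symm (- S)" using sS unfolding symm_def by (simp add: transpose_def vec_eq_iff)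
    from min_eig[OF this] obtain v where nv: "norm v = 1"
      and ev: "(- S) *v v = (v \<bullet> ((- S) *v v)) *\<^sub>R v"
      and bd: "\<forall>w. (v \<bullet> ((- S) *v v)) * (w \<bullet> w) \<le> w \<bullet> ((- S) *v w)" by blast
    have negmv: "(- S) *v w = - (S *v w)" for w
      by (simp add: matrix_vector_mult_def vec_eq_iff sum_negf)
    define l where "l = v \<bullet> (S *v v)"
    have Sv: "S *v v = l *\<^sub>R v" using ev unfolding negmv l_def by (simp add: inner_minus_right)
    have bd2: "w \<bullet> (S *v w) \<le> l * (w \<bullet> w)" for w
      using bd[rule_format, of w] unfolding negmv l_def by (simp add: inner_minus_right)
    have vv: "v \<bullet> v = 1" using nv by (simp add: power2_norm_eq_inner[symmetric])
    have l0: "l \<ge> 0" using pS unfolding psdq_def l_def by auto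
    have lpos: "l > 0"
    proof (rule ccontr)
      assume "\<not> l > 0"
      hence l00: "l = 0" using l0 by simp
      have "S *v w = 0" for w
      proof -
        have "w \<bullet> (S *v w) = 0" using bd2[of w] pS unfolding psdq_def l00 by (simp add: order_antisym)
        from psd_zero[OF sS pS this] show ?thesis .
      qed
      hence "S = 0" by (subst matrix_eq) simp
      with False show False by simp
    qed
    define m where "m = sqrt l *\<^sub>R v"
    have omm: "outer m m = l *\<^sub>R outer v v"
      unfolding m_def outer_def using l0 by (simp add: vec_eq_iff)
    define S' where "S' = S - outer m m"
    have S'mv: "S' *v x = S *v x - (v \<bullet> x) *\<^sub>R (l *\<^sub>R v)" for x
      unfolding S'_def omm by (simp add: matrix_vector_mult_diff_rdistrib scaleR_matrix_vector_assoc[symmetric] outer_mv)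
    have sS': "symm S'" using sS unfolding S'_def symm_def by (simp add: outer_def transpose_def vec_eq_iff mult.commute)
    have pS': "psdq S'" unfolding psdq_def
    proof
      fix w
      define c where "c = v \<bullet> w"
      define u where "u = w - c *\<^sub>R v"
      have "u \<bullet> v = w \<bullet> v - c * (v \<bullet> v)" unfolding u_def by (simp add: inner_diff_left)
      hence uv: "u \<bullet> v = 0" using vv unfolding c_def by (simp add: inner_commute)
      have wu: "w = u + c *\<^sub>R v" unfolding u_def by simp
      have vSu: "v \<bullet> (S *v u) = 0" using symm_swap[OF sS, of v u] Sv uv by simp
      have "w \<bullet> (S *v w) = u \<bullet> (S *v u) + c * c * l"
        unfolding wu by (simp add: matrix_vector_right_distrib matrix_vector_mult_scaleR inner_add_left inner_add_right Sv uv vSu vv inner_commute[of u v])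
      moreover have "u \<bullet> (S *v u) \<ge> 0" using pS unfolding psdq_def by auto
      ultimately show "0 \<le> w \<bullet> (S' *v w)" unfolding S'mv c_def by (simp add: inner_diff_right inner_commute)
    qed
    have sub: "range (\<lambda>x. S' *v x) \<subset> range (\<lambda>x. S *v x)"
    proof
      show "range (\<lambda>x. S' *v x) \<subseteq> range (\<lambda>x. S *v x)"
      proof safe
        fix x
        have "S' *v x = S *v (x - (v \<bullet> x) *\<^sub>R v)"
          unfolding S'mv by (simp add: matrix_vector_mult_diff_distrib matrix_vector_mult_scaleR Sv)
        thus "S' *v x \<in> range (\<lambda>x. S *v x)" by auto
      qed
      have vin: "v \<in> range (\<lambda>x. S *v x)"
      proof
        show "v = S *v ((1/l) *\<^sub>R v)" using lpos by (simp add: matrix_vector_mult_scaleR Sv)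
      qed simp
      have vnot: "v \<notin> range (\<lambda>x. S' *v x)"
      proof
        assume "v \<in> range (\<lambda>x. S' *v x)"
        then obtain y where y: "v = S' *v y" by auto
        have S'v: "S' *v v = 0" unfolding S'mv Sv vv by simp
        have "1 = v \<bullet> (S' *v y)" using vv y by simp
        also have "\<dots> = y \<bullet> (S' *v v)" by (rule symm_swap[OF sS'])
        finally show False unfolding S'v by simp
      qed
      show "range (\<lambda>x. S' *v x) \<noteq> range (\<lambda>x. S *v x)" using vin vnot by blast
    qed
    have sp1: "span (range (\<lambda>x. S' *v x)) = range (\<lambda>x. S' *v x)" using subspace_range_mv[of S'] by simp
    have sp2: "span (range (\<lambda>x. S *v x)) = range (\<lambda>x. S *v x)" using subspace_range_mv[of S] by simp
    have "span (range (\<lambda>x. S' *v x)) \<subset> span (range (\<lambda>x. S *v x))" unfolding sp1 sp2 by (rule sub)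
    from dim_psubset[OF this] have "dim (range (\<lambda>x. S' *v x)) < n" using less(2) by simp
    from less(1)[OF this refl sS' pS'] obtain ms where ms: "S' = sum_list (map (\<lambda>m. outer m m) ms)" by blast
    show ?thesis
      by (rule exI[of _ "m # ms"]) (simp add: ms[symmetric] S'_def)
  qed
qed

lemma decomp: "symm S \<Longrightarrow> psdq S \<Longrightarrow> \<exists>ms. S = sum_list (map (\<lambda>m. outer m m) ms)"
  using decomp_aux by blast

lemma frob_add_left: "frob (X + Y) Z = frob X Z + frob Y Z"
  by (simp add: frob_def sum.distrib[symmetric] algebra_simps)
lemma frob_diff_left: "frob (X - Y) Z = frob X Z - frob Y Z"
  by (simp add: frob_def sum_subtractf[symmetric] algebra_simps)
lemma frob_scaleR_left: "frob (c *\<^sub>R X) Z = c * frob X Z"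
  by (simp add: frob_def sum_distrib_left algebra_simps)
lemma frob_zero_left[simp]: "frob 0 Z = 0"
  by (simp add: frob_def)
lemma frob_zero_right[simp]: "frob Z 0 = 0"
  by (simp add: frob_def)
lemma frob_add_right: "frob Z (X + Y) = frob Z X + frob Z Y"
  by (simp add: frob_def sum.distrib[symmetric] algebra_simps)
lemma frob_scaleR_right: "frob Z (c *\<^sub>R X) = c * frob Z X"
  by (simp add: frob_def sum_distrib_left algebra_simps)
lemma frob_sum_left: "frob (\<Sum>j\<in>J. f j) Z = (\<Sum>j\<in>J. frob (f j) Z)"
  by (induction J rule: infinite_finite_induct) (auto simp: frob_add_left)
lemma frob_sum_right: "frob Z (\<Sum>j\<in>J. f j) = (\<Sum>j\<in>J. frob Z (f j))"
  by (induction J rule: infinite_finite_induct) (auto simp: frob_add_right frob_zero_right)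

lemma frob_outer: "frob (outer m m) X = m \<bullet> (X *v m)"
  by (simp add: frob_def outer_def inner_vec_def matrix_vector_mult_def sum_distrib_left mult_ac)

lemma frob_sum_list: "frob (sum_list (map (\<lambda>m. outer m m) ms)) X = sum_list (map (\<lambda>m. m \<bullet> (X *v m)) ms)"
  by (induction ms) (simp_all add: frob_add_left frob_outer)

lemma frob_psd_upper:
  assumes "symm S" "psdq S" "\<And>m. m \<bullet> (X *v m) \<le> c * (m \<bullet> m)"
  shows "frob S X \<le> c * frob S (mat 1)"
proof -
  obtain ms where ms: "S = sum_list (map (\<lambda>m. outer m m) ms)" using decomp[OF assms(1,2)] by blast
  have "frob S X \<le> sum_list (map (\<lambda>m. c * (m \<bullet> m)) ms)"
    unfolding ms frob_sum_list by (rule sum_list_mono) (rule assms(3))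
  also have "\<dots> = c * frob S (mat 1)" unfolding ms frob_sum_list by (simp add: sum_list_const_mult)
  finally show ?thesis .
qed

lemma frob_psd_lower:
  assumes "symm S" "psdq S" "\<And>m. c * (m \<bullet> m) \<le> m \<bullet> (X *v m)"
  shows "c * frob S (mat 1) \<le> frob S X"
proof -
  obtain ms where ms: "S = sum_list (map (\<lambda>m. outer m m) ms)" using decomp[OF assms(1,2)] by blast
  have "c * frob S (mat 1) = sum_list (map (\<lambda>m. c * (m \<bullet> m)) ms)"
    unfolding ms frob_sum_list by (simp add: sum_list_const_mult)
  also have "\<dots> \<le> frob S X"
    unfolding ms frob_sum_list by (rule sum_list_mono) (rule assms(3))
  finally show ?thesis .
qed

lemma frob_psd_trace_nonneg:
  assumes "symm S" "psdq S" shows "0 \<le> frob S (mat 1)"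
  using frob_psd_lower[OF assms, of 0 "mat 1"] by simp


definition Lst :: "('s::finite \<Rightarrow> 's \<Rightarrow> real) \<Rightarrow> ('s \<Rightarrow> real^'d^'d) \<Rightarrow> ('s \<Rightarrow> real^'d^'d) \<Rightarrow> 's \<Rightarrow> real^'d^'d" where
  "Lst p G V i = transpose (G i) ** Eop p V i ** G i"

definition bnd :: "('s \<Rightarrow> real^'d^'d) \<Rightarrow> ('s \<Rightarrow> real^'d^'d) \<Rightarrow> bool" where
  "bnd V W \<longleftrightarrow> (\<forall>j u v. 2 * \<bar>u \<bullet> (V j *v v)\<bar> \<le> u \<bullet> (W j *v u) + v \<bullet> (W j *v v))"

lemma sum_mv: "(\<Sum>j\<in>J. f j) *v y = (\<Sum>j\<in>J. f j *v y)"
  by (induction J rule: infinite_finite_induct) (auto simp: matrix_vector_mult_add_rdistrib)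

lemma Eop_mv: "Eop p V i *v y = (\<Sum>j\<in>UNIV. p i j *\<^sub>R (V j *v y))"
  unfolding Eop_def sum_mv by (simp add: scaleR_matrix_vector_assoc)

lemma Lst_bilin: "u \<bullet> (Lst p G V i *v w) = (\<Sum>j\<in>UNIV. p i j * ((G i *v u) \<bullet> (V j *v (G i *v w))))"
proof -
  have "Lst p G V i *v w = transpose (G i) *v (Eop p V i *v (G i *v w))"
    unfolding Lst_def by (metis matrix_vector_mul_assoc matrix_mul_assoc)
  hence "u \<bullet> (Lst p G V i *v w) = (G i *v u) \<bullet> (Eop p V i *v (G i *v w))"
    using dot_mv_transpose[of u "transpose (G i)"] by simp
  also have "\<dots> = (\<Sum>j\<in>UNIV. p i j * ((G i *v u) \<bullet> (V j *v (G i *v w))))"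
    unfolding Eop_mv by (simp add: inner_sum_right)
  finally show ?thesis .
qed

lemma mat_eq_bilin:
  fixes X Y :: "real^'n^'m"
  assumes "\<And>u w. u \<bullet> (X *v w) = u \<bullet> (Y *v w)"
  shows "X = Y"
proof (subst matrix_eq, intro allI)
  fix w
  have "(X *v w - Y *v w) \<bullet> (X *v w - Y *v w) = 0"
    using assms[of "X *v w - Y *v w" w] by (simp add: inner_diff_right)
  thus "X *v w = Y *v w" by simp
qed

lemma Lst_diff: "Lst p G (\<lambda>j. V j - W j) i = Lst p G V i - Lst p G W i"
  by (rule mat_eq_bilin)
     (simp add: Lst_bilin matrix_vector_mult_diff_rdistrib inner_diff_right sum_subtractf[symmetric] algebra_simps)

lemma Lt_diff: "(Lst p G ^^ t) (\<lambda>j. V j - W j) = (\<lambda>i. (Lst p G ^^ t) V i - (Lst p G ^^ t) W i)"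
  by (induction t) (simp_all add: Lst_diff[symmetric])

lemma Lt_qf_mono:
  assumes p: "\<And>i j. p i j \<ge> 0" and le: "\<And>j x. x \<bullet> (V j *v x) \<le> x \<bullet> (W j *v x)"
  shows "x \<bullet> ((Lst p G ^^ t) V i *v x) \<le> x \<bullet> ((Lst p G ^^ t) W i *v x)"
proof (induction t arbitrary: i x)
  case 0 then show ?case using le by simp
next
  case (Suc t)
  show ?case
    unfolding funpow.simps o_apply Lst_bilin
    by (rule sum_mono) (simp add: mult_left_mono p Suc)
qed

lemma Lt_qf_scale:
  "x \<bullet> ((Lst p G ^^ t) (\<lambda>j. c *\<^sub>R V j) i *v x) = c * (x \<bullet> ((Lst p G ^^ t) V i *v x))"
proof (induction t arbitrary: i x)
  case 0 then show ?case by (simp add: scaleR_matrix_vector_assoc[symmetric])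
next
  case (Suc t)
  show ?case
    unfolding funpow.simps o_apply Lst_bilin Suc by (simp add: sum_distrib_left mult_ac)
qed

lemma Lt_qf_add:
  "x \<bullet> ((Lst p G ^^ t) (\<lambda>j. V j + W j) i *v x) = x \<bullet> ((Lst p G ^^ t) V i *v x) + x \<bullet> ((Lst p G ^^ t) W i *v x)"
proof (induction t arbitrary: i x)
  case 0 then show ?case by (simp add: matrix_vector_mult_add_rdistrib inner_add_right)
next
  case (Suc t)
  show ?case
    unfolding funpow.simps o_apply Lst_bilin Suc by (simp add: sum.distrib[symmetric] algebra_simps)
qed

lemma Lt_qf_cong:
  assumes p: "\<And>i j. p i j \<ge> 0" and eq: "\<And>j x. x \<bullet> (V j *v x) = x \<bullet> (W j *v x)"
  shows "x \<bullet> ((Lst p G ^^ t) V i *v x) = x \<bullet> ((Lst p G ^^ t) W i *v x)"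
proof (induction t arbitrary: i x)
  case 0 then show ?case using eq by simp
next
  case (Suc t)
  show ?case unfolding funpow.simps o_apply Lst_bilin Suc ..
qed

lemma Lt_psd:
  assumes p: "\<And>i j. p i j \<ge> 0" and ps: "\<And>j x. 0 \<le> x \<bullet> (V j *v x)"
  shows "0 \<le> x \<bullet> ((Lst p G ^^ t) V i *v x)"
proof (induction t arbitrary: i x)
  case 0 then show ?case using ps by simp
next
  case (Suc t)
  show ?case unfolding funpow.simps o_apply Lst_bilin
    by (rule sum_nonneg) (simp add: p Suc)
qed

lemma bnd_Lst:
  assumes p: "\<And>i j. p i j \<ge> 0" and b: "bnd V W"
  shows "bnd (Lst p G V) (Lst p G W)"
  unfolding bnd_def
proof (intro allI)
  fix i u v
  have "2 * \<bar>u \<bullet> (Lst p G V i *v v)\<bar> \<le> (\<Sum>j\<in>UNIV. p i j * (2 * \<bar>(G i *v u) \<bullet> (V j *v (G i *v v))\<bar>))"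
    unfolding Lst_bilin sum_distrib_left[symmetric]
    by (rule order_trans[OF mult_left_mono[OF sum_abs]]) (simp_all add: abs_mult p mult_ac sum_distrib_left)
  also have "\<dots> \<le> (\<Sum>j\<in>UNIV. p i j * ((G i *v u) \<bullet> (W j *v (G i *v u)) + (G i *v v) \<bullet> (W j *v (G i *v v))))"
    by (rule sum_mono, rule mult_left_mono) (use b p in \<open>auto simp: bnd_def\<close>)
  also have "\<dots> = u \<bullet> (Lst p G W i *v u) + v \<bullet> (Lst p G W i *v v)"
    unfolding Lst_bilin by (simp add: sum.distrib[symmetric] algebra_simps)
  finally show "2 * \<bar>u \<bullet> (Lst p G V i *v v)\<bar> \<le> u \<bullet> (Lst p G W i *v u) + v \<bullet> (Lst p G W i *v v)" .
qed

lemma bnd_Lt: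
  assumes p: "\<And>i j. p i j \<ge> 0" and b: "bnd V W"
  shows "bnd ((Lst p G ^^ t) V) ((Lst p G ^^ t) W)"
  by (induction t) (simp_all add: b bnd_Lst[OF p])

lemma two_abs_inner: "2 * \<bar>(u::'a::real_inner) \<bullet> v\<bar> \<le> u \<bullet> u + v \<bullet> v"
proof -
  have "0 \<le> (u - v) \<bullet> (u - v)" "0 \<le> (u + v) \<bullet> (u + v)" by simp_all
  thus ?thesis by (simp add: inner_diff_left inner_diff_right inner_add_left inner_add_right inner_commute abs_le_iff)
qed

lemma bnd_U: "bnd (\<lambda>j. mat 1) (\<lambda>j. mat 1)"
  unfolding bnd_def by (simp add: two_abs_inner)

definition cnorm :: "('s::finite \<Rightarrow> real^'d^'d) \<Rightarrow> real" where
  "cnorm V = (\<Sum>j\<in>UNIV. onorm (\<lambda>x. V j *v x))"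

lemma cnorm_nonneg: "0 \<le> cnorm V"
  unfolding cnorm_def by (intro sum_nonneg onorm_pos_le) simp

lemma onorm_le_cnorm: "onorm (\<lambda>x. V j *v x) \<le> cnorm V"
  unfolding cnorm_def by (rule member_le_sum) (auto intro: onorm_pos_le)

lemma bnd_any: "bnd V (\<lambda>j. cnorm V *\<^sub>R mat 1)"
  unfolding bnd_def
proof (intro allI)
  fix j u v
  have "\<bar>u \<bullet> (V j *v v)\<bar> \<le> norm u * norm (V j *v v)" by (rule Cauchy_Schwarz_ineq2)
  also have "\<dots> \<le> norm u * (cnorm V * norm v)"
    by (rule mult_left_mono[OF order_trans[OF onorm[OF matrix_vector_mul_bounded_linear]]])
       (auto intro: mult_right_mono onorm_le_cnorm)
  finally have h: "2 * \<bar>u \<bullet> (V j *v v)\<bar> \<le> cnorm V * (2 * norm u * norm v)" by (simp add: mult_ac)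
  have "2 * norm u * norm v \<le> norm u ^ 2 + norm v ^ 2" by (simp add: sum_squares_bound)
  hence "cnorm V * (2 * norm u * norm v) \<le> cnorm V * (norm u ^ 2 + norm v ^ 2)"
    by (rule mult_left_mono) (rule cnorm_nonneg)
  with h show "2 * \<bar>u \<bullet> (V j *v v)\<bar> \<le> u \<bullet> ((cnorm V *\<^sub>R mat 1) *v u) + v \<bullet> ((cnorm V *\<^sub>R mat 1) *v v)"
    by (simp add: scaleR_matrix_vector_assoc[symmetric] power2_norm_eq_inner algebra_simps)
qed


lemma entry_inner: "axis a 1 \<bullet> ((X::real^'n^'m) *v axis b 1) = X$a$b"
proof -
  have "(X *v axis b 1) $ a = X $ a $ b"
    by (simp add: matrix_vector_mult_def axis_def mult.commute if_distrib[of "\<lambda>z. _ * z"] sum.delta cong: if_cong)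
  thus ?thesis by (simp add: inner_axis')
qed

lemma qf_expand: "(x::real^'n) \<bullet> (X *v x) = (\<Sum>a\<in>UNIV. \<Sum>b\<in>UNIV. X$a$b * (x$a * x$b))"
  by (simp add: inner_vec_def matrix_vector_mult_def sum_distrib_left mult_ac)

lemma qf_le_entries: "(x::real^'n) \<bullet> (X *v x) \<le> (\<Sum>a\<in>UNIV. \<Sum>b\<in>UNIV. \<bar>X$a$b\<bar>) * (x \<bullet> x)"
proof -
  have "x \<bullet> (X *v x) \<le> (\<Sum>a\<in>UNIV. \<Sum>b\<in>UNIV. \<bar>X$a$b\<bar> * (x \<bullet> x))"
    unfolding qf_expand
  proof (intro sum_mono)
    fix a b
    have "\<bar>x$a\<bar> * \<bar>x$b\<bar> \<le> norm x * norm x"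
      by (intro mult_mono component_le_norm_cart) auto
    hence "\<bar>x$a * x$b\<bar> \<le> x \<bullet> x" by (simp add: abs_mult power2_norm_eq_inner[symmetric] power2_eq_square)
    hence "\<bar>X$a$b\<bar> * \<bar>x$a * x$b\<bar> \<le> \<bar>X$a$b\<bar> * (x \<bullet> x)"
      by (intro mult_left_mono) auto
    moreover have "X$a$b * (x$a * x$b) \<le> \<bar>X$a$b\<bar> * \<bar>x$a * x$b\<bar>"
      by (simp only: abs_mult[symmetric] abs_ge_self)
    ultimately show "X$a$b * (x$a * x$b) \<le> \<bar>X$a$b\<bar> * (x \<bullet> x)" by linarith
  qed
  also have "\<dots> = (\<Sum>a\<in>UNIV. \<Sum>b\<in>UNIV. \<bar>X$a$b\<bar>) * (x \<bullet> x)" by (simp add: sum_distrib_right)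
  finally show ?thesis .
qed

definition geo_stable :: "('s::finite \<Rightarrow> 's \<Rightarrow> real) \<Rightarrow> ('s \<Rightarrow> real^'d^'d) \<Rightarrow> real \<Rightarrow> real \<Rightarrow> bool" where
  "geo_stable p G C r \<longleftrightarrow> 0 \<le> C \<and> 0 \<le> r \<and> r < 1 \<and>
     (\<forall>t i x. x \<bullet> ((Lst p G ^^ t) (\<lambda>j. mat 1) i *v x) \<le> C * r ^ t * (x \<bullet> x))"

lemma geo:
  fixes G :: "'s::finite \<Rightarrow> real^'d^'d"
  assumes p: "\<And>i j. p i j \<ge> 0"
    and conv: "\<And>i x. (\<lambda>t. x \<bullet> ((Lst p G ^^ t) (\<lambda>j. mat 1) i *v x)) \<longlonglongrightarrow> 0"
  shows "\<exists>C r. geo_stable p G C r"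
proof -
  define W where "W t = (Lst p G ^^ t) (\<lambda>j. mat 1)" for t
  have bW: "bnd (W t) (W t)" for t unfolding W_def by (rule bnd_Lt[OF p bnd_U])
  have ent: "(\<lambda>t. \<bar>W t i $ a $ b\<bar>) \<longlonglongrightarrow> 0" for i a b
  proof -
    have le: "\<bar>W t i $ a $ b\<bar> \<le> axis a 1 \<bullet> (W t i *v axis a 1) + axis b 1 \<bullet> (W t i *v axis b 1)" for t
    proof -
      have "2 * \<bar>axis a 1 \<bullet> (W t i *v axis b 1)\<bar> \<le> axis a 1 \<bullet> (W t i *v axis a 1) + axis b 1 \<bullet> (W t i *v axis b 1)"
        using bW[of t] unfolding bnd_def by blast
      moreover have "\<bar>axis a 1 \<bullet> (W t i *v axis b 1)\<bar> \<le> 2 * \<bar>axis a 1 \<bullet> (W t i *v axis b 1)\<bar>" by simp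
      ultimately show ?thesis unfolding entry_inner by linarith
    qed
    have "(\<lambda>t. axis a 1 \<bullet> (W t i *v axis a 1) + axis b 1 \<bullet> (W t i *v axis b 1)) \<longlonglongrightarrow> 0 + 0"
      unfolding W_def by (intro tendsto_intros conv)
    hence "(\<lambda>t. axis a 1 \<bullet> (W t i *v axis a 1) + axis b 1 \<bullet> (W t i *v axis b 1)) \<longlonglongrightarrow> 0" by simp
    thus ?thesis by (rule Lim_null_comparison[rotated]) (simp add: le)
  qed
  define s where "s t = (\<Sum>i\<in>UNIV. \<Sum>a\<in>UNIV. \<Sum>b\<in>UNIV. \<bar>W t i $ a $ b\<bar>)" for t
  have s0: "0 \<le> s t" for t unfolding s_def by (intro sum_nonneg) auto
  have "s \<longlonglongrightarrow> (\<Sum>i\<in>(UNIV::'s set). \<Sum>a\<in>(UNIV::'d set). \<Sum>b\<in>(UNIV::'d set). 0)"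
    unfolding s_def by (intro tendsto_sum ent)
  hence "s \<longlonglongrightarrow> 0" by simp
  hence "eventually (\<lambda>t. s t < 1/2) sequentially" by (rule order_tendstoD) simp
  then obtain N0 where N0: "\<And>t. t \<ge> N0 \<Longrightarrow> s t < 1/2" by (auto simp: eventually_sequentially)
  define N where "N = Suc N0"
  have Npos: "N > 0" unfolding N_def by simp
  have sN: "s N \<le> 1/2" using N0[of N] unfolding N_def by simp
  have qfs: "x \<bullet> (W t i *v x) \<le> s t * (x \<bullet> x)" for t i x
  proof -
    have "x \<bullet> (W t i *v x) \<le> (\<Sum>a\<in>UNIV. \<Sum>b\<in>UNIV. \<bar>W t i $ a $ b\<bar>) * (x \<bullet> x)" by (rule qf_le_entries)
    also have "\<dots> \<le> s t * (x \<bullet> x)"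
      unfolding s_def by (intro mult_right_mono member_le_sum[where f="\<lambda>i. \<Sum>a\<in>UNIV. \<Sum>b\<in>UNIV. \<bar>W t i $ a $ b\<bar>"]) (auto intro: sum_nonneg)
    finally show ?thesis .
  qed
  have half: "x \<bullet> (W N j *v x) \<le> x \<bullet> ((1/2) *\<^sub>R mat 1 *v x)" for j x
  proof -
    have "x \<bullet> (W N j *v x) \<le> s N * (x \<bullet> x)" by (rule qfs)
    also have "\<dots> \<le> (1/2) * (x \<bullet> x)" by (rule mult_right_mono[OF sN]) simp
    finally show ?thesis by (simp add: scaleR_matrix_vector_assoc[symmetric])
  qed
  have step: "x \<bullet> (W (k * N + r) i *v x) \<le> (1/2)^k * (x \<bullet> (W r i *v x))" for k r i x
  proof (induction k arbitrary: i x)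
    case 0 then show ?case by simp
  next
    case (Suc k)
    have "W (Suc k * N + r) = (Lst p G ^^ (k * N + r)) (W N)"
    proof -
      have "Suc k * N + r = (k * N + r) + N" by simp
      thus ?thesis unfolding W_def by (simp only: funpow_add o_apply)
    qed
    hence "x \<bullet> (W (Suc k * N + r) i *v x) \<le> x \<bullet> ((Lst p G ^^ (k * N + r)) (\<lambda>j. (1/2) *\<^sub>R mat 1) i *v x)"
      using Lt_qf_mono[OF p, of "W N" "\<lambda>j. (1/2) *\<^sub>R mat 1", OF half] by simp
    also have "\<dots> = (1/2) * (x \<bullet> (W (k * N + r) i *v x))"
      unfolding W_def by (rule Lt_qf_scale)
    also have "\<dots> \<le> (1/2) * ((1/2)^k * (x \<bullet> (W r i *v x)))"
      by (rule mult_left_mono[OF Suc]) simp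
    finally show ?case by simp
  qed
  define c0 where "c0 = (\<Sum>r<N. s r)"
  have c00: "0 \<le> c0" unfolding c0_def by (intro sum_nonneg s0)
  have sc0: "r < N \<Longrightarrow> s r \<le> c0" for r
    unfolding c0_def by (rule member_le_sum[where f=s]) (auto intro: s0)
  define rho where "rho = root N (1/2)"
  have rho0: "0 \<le> rho" "rho < 1" "rho \<le> 1" using Npos unfolding rho_def by auto
  have rhoN: "rho ^ N = 1/2" using Npos unfolding rho_def by simp
  have main: "x \<bullet> (W t i *v x) \<le> (2 * c0) * rho ^ t * (x \<bullet> x)" for t i x
  proof -
    define k where "k = t div N"
    define r where "r = t mod N"
    have t: "t = k * N + r" unfolding k_def r_def by simp
    have rN: "r < N" unfolding r_def using Npos by simp
    have "x \<bullet> (W t i *v x) \<le> (1/2)^k * (x \<bullet> (W r i *v x))" unfolding t by (rule step)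
    also have "\<dots> \<le> (1/2)^k * (c0 * (x \<bullet> x))"
      by (rule mult_left_mono[OF order_trans[OF qfs mult_right_mono[OF sc0[OF rN]]]]) simp_all
    also have "(1/2::real)^k \<le> 2 * rho ^ t"
    proof -
      have "rho ^ t = (rho ^ N) ^ k * rho ^ r" unfolding t by (simp add: power_add power_mult mult.commute)
      also have "\<dots> = (1/2)^k * rho ^ r" unfolding rhoN ..
      finally have e: "rho ^ t = (1/2)^k * rho ^ r" .
      have "rho ^ N \<le> rho ^ r" by (rule power_decreasing) (use rN rho0 in auto)
      hence "1/2 \<le> rho ^ r" unfolding rhoN .
      hence "(1/2)^k * (1/2) \<le> (1/2::real)^k * rho ^ r" by (intro mult_left_mono) auto
      thus ?thesis unfolding e by simp
    qed
    hence "(1/2)^k * (c0 * (x \<bullet> x)) \<le> (2 * rho ^ t) * (c0 * (x \<bullet> x))"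
      by (rule mult_right_mono) (simp add: c00)
    finally show ?thesis by (simp add: mult_ac)
  qed
  have "geo_stable p G (2 * c0) rho"
    unfolding geo_stable_def using c00 rho0 main unfolding W_def by auto
  thus ?thesis by blast
qed

lemma geo_bilin:
  assumes p: "\<And>i j. p i j \<ge> 0" and g: "geo_stable p G C r"
  shows "2 * \<bar>u \<bullet> ((Lst p G ^^ t) V i *v v)\<bar> \<le> cnorm V * C * r ^ t * (u \<bullet> u + v \<bullet> v)"
proof -
  have "bnd ((Lst p G ^^ t) V) ((Lst p G ^^ t) (\<lambda>j. cnorm V *\<^sub>R mat 1))" by (rule bnd_Lt[OF p bnd_any])
  hence "2 * \<bar>u \<bullet> ((Lst p G ^^ t) V i *v v)\<bar> \<le>
     u \<bullet> ((Lst p G ^^ t) (\<lambda>j. cnorm V *\<^sub>R mat 1) i *v u) + v \<bullet> ((Lst p G ^^ t) (\<lambda>j. cnorm V *\<^sub>R mat 1) i *v v)"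
    unfolding bnd_def by blast
  also have "\<dots> = cnorm V * (u \<bullet> ((Lst p G ^^ t) (\<lambda>j. mat 1) i *v u)) + cnorm V * (v \<bullet> ((Lst p G ^^ t) (\<lambda>j. mat 1) i *v v))"
    by (simp add: Lt_qf_scale)
  also have "\<dots> \<le> cnorm V * (C * r ^ t * (u \<bullet> u)) + cnorm V * (C * r ^ t * (v \<bullet> v))"
    using g cnorm_nonneg[of V] unfolding geo_stable_def by (intro add_mono mult_left_mono) auto
  finally show ?thesis by (simp add: algebra_simps)
qed

lemma geo_entry:
  assumes p: "\<And>i j. p i j \<ge> 0" and g: "geo_stable p G C r"
  shows "\<bar>(Lst p G ^^ t) V i $ a $ b\<bar> \<le> cnorm V * C * r ^ t"
  using geo_bilin[OF p g, of "axis a 1" t V i "axis b 1"] by (simp add: entry_inner)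

lemma geo_qf:
  assumes p: "\<And>i j. p i j \<ge> 0" and g: "geo_stable p G C r"
  shows "\<bar>x \<bullet> ((Lst p G ^^ t) V i *v x)\<bar> \<le> cnorm V * C * r ^ t * (x \<bullet> x)"
  using geo_bilin[OF p g, of x t V i x] by simp


lemma norm_vec_le_sum: "norm (x::'a::real_normed_vector^'n) \<le> (\<Sum>i\<in>UNIV. norm (x$i))"
  by (simp add: norm_vec_def L2_set_le_sum)

lemma summable_mat:
  fixes f :: "nat \<Rightarrow> real^'n^'m"
  assumes b: "\<And>t a b. \<bar>f t $ a $ b\<bar> \<le> g t" and sg: "summable g"
  shows "summable f"
proof (rule summable_comparison_test)
  show "\<exists>N. \<forall>n\<ge>N. norm (f n) \<le> (real CARD('m) * real CARD('n)) * g n"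
  proof (intro exI allI impI)
    fix n
    have "norm (f n) \<le> (\<Sum>a\<in>UNIV. norm (f n $ a))" by (rule norm_vec_le_sum)
    also have "\<dots> \<le> (\<Sum>a\<in>(UNIV::'m set). \<Sum>b\<in>(UNIV::'n set). g n)"
    proof (rule sum_mono)
      fix a
      have "norm (f n $ a) \<le> (\<Sum>b\<in>UNIV. \<bar>f n $ a $ b\<bar>)" by (rule norm_le_l1_cart)
      also have "\<dots> \<le> (\<Sum>b\<in>(UNIV::'n set). g n)" by (rule sum_mono) (rule b)
      finally show "norm (f n $ a) \<le> (\<Sum>b\<in>(UNIV::'n set). g n)" .
    qed
    also have "\<dots> = (real CARD('m) * real CARD('n)) * g n" by simp
    finally show "norm (f n) \<le> (real CARD('m) * real CARD('n)) * g n" .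
  qed
  show "summable (\<lambda>n. (real CARD('m) * real CARD('n)) * g n)" by (rule summable_mult[OF sg])
qed

lemma bil_expand: "(u::real^'m) \<bullet> ((X::real^'n^'m) *v w) = (\<Sum>a\<in>UNIV. \<Sum>b\<in>UNIV. X$a$b * (u$a * w$b))"
  by (simp add: inner_vec_def matrix_vector_mult_def sum_distrib_left mult_ac)

lemma sums_bilin:
  fixes f :: "nat \<Rightarrow> real^'n^'m"
  assumes "f sums s"
  shows "(\<lambda>t. u \<bullet> (f t *v w)) sums (u \<bullet> (s *v w))"
  unfolding bil_expand
  by (intro sums_sum sums_mult2 sums_vec_nth assms)

lemma geo_summable:
  assumes p: "\<And>i j. p i j \<ge> 0" and g: "geo_stable p G C r"
  shows "summable (\<lambda>t. (Lst p G ^^ t) V i)"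
proof (rule summable_mat)
  show "\<bar>(Lst p G ^^ t) V i $ a $ b\<bar> \<le> cnorm V * C * r ^ t" for t a b by (rule geo_entry[OF p g])
  show "summable (\<lambda>t. cnorm V * C * r ^ t)"
    using g unfolding geo_stable_def by (intro summable_mult summable_geometric) auto
qed

definition Psum :: "('s::finite \<Rightarrow> 's \<Rightarrow> real) \<Rightarrow> ('s \<Rightarrow> real^'d^'d) \<Rightarrow> ('s \<Rightarrow> real^'d^'d) \<Rightarrow> 's \<Rightarrow> real^'d^'d" where
  "Psum p G V0 i = suminf (\<lambda>t. (Lst p G ^^ t) V0 i)"

lemma Psum_sums:
  assumes p: "\<And>i j. p i j \<ge> 0" and g: "geo_stable p G C r"
  shows "(\<lambda>t. (Lst p G ^^ t) V0 i) sums Psum p G V0 i"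
  unfolding Psum_def using geo_summable[OF p g] by (rule summable_sums)

lemma Psum_sol:
  assumes p: "\<And>i j. p i j \<ge> 0" and g: "geo_stable p G C r"
  shows "Psum p G V0 i = V0 i + Lst p G (Psum p G V0) i"
proof (rule mat_eq_bilin)
  fix u w
  have s1: "(\<lambda>t. u \<bullet> ((Lst p G ^^ t) V0 i *v w)) sums (u \<bullet> (Psum p G V0 i *v w))"
    by (rule sums_bilin[OF Psum_sums[OF p g]])
  have "(\<lambda>t. \<Sum>j\<in>UNIV. p i j * ((G i *v u) \<bullet> ((Lst p G ^^ t) V0 j *v (G i *v w)))) sums
        (\<Sum>j\<in>UNIV. p i j * ((G i *v u) \<bullet> (Psum p G V0 j *v (G i *v w))))"
    by (intro sums_sum sums_mult sums_bilin Psum_sums[OF p g])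
  hence "(\<lambda>t. u \<bullet> ((Lst p G ^^ Suc t) V0 i *v w)) sums (u \<bullet> (Lst p G (Psum p G V0) i *v w))"
    unfolding funpow.simps o_apply Lst_bilin .
  hence "(\<lambda>t. u \<bullet> ((Lst p G ^^ t) V0 i *v w)) sums (u \<bullet> (Lst p G (Psum p G V0) i *v w) + u \<bullet> (V0 i *v w))"
    using sums_Suc_iff[where f="\<lambda>t. u \<bullet> ((Lst p G ^^ t) V0 i *v w)"] by simp
  with s1 have "u \<bullet> (Psum p G V0 i *v w) = u \<bullet> (Lst p G (Psum p G V0) i *v w) + u \<bullet> (V0 i *v w)"
    by (simp add: sums_iff)
  thus "u \<bullet> (Psum p G V0 i *v w) = u \<bullet> ((V0 i + Lst p G (Psum p G V0) i) *v w)"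
    by (simp add: matrix_vector_mult_add_rdistrib inner_add_right)
qed

lemma lyap_unique:
  assumes p: "\<And>i j. p i j \<ge> 0" and g: "geo_stable p G C r"
    and P1: "\<And>i. P1 i = V0 i + Lst p G P1 i" and P2: "\<And>i. P2 i = V0 i + Lst p G P2 i"
  shows "P1 = P2"
proof -
  define Z where "Z j = P1 j - P2 j" for j
  have fixZ: "Lst p G Z = Z"
  proof
    fix i
    have "Lst p G Z i = Lst p G P1 i - Lst p G P2 i" unfolding Z_def by (rule Lst_diff)
    also have "\<dots> = Z i" unfolding Z_def using P1[of i] P2[of i] by (simp add: algebra_simps)
    finally show "Lst p G Z i = Z i" .
  qed
  have Zt: "(Lst p G ^^ t) Z = Z" for t by (induction t) (simp_all add: fixZ)
  have "Z i $ a $ b = 0" for i a b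
  proof -
    have le: "\<bar>Z i $ a $ b\<bar> \<le> cnorm Z * C * r ^ t" for t
      using geo_entry[OF p g, of t Z i a b] unfolding Zt .
    have "(\<lambda>t. cnorm Z * C * r ^ t) \<longlonglongrightarrow> cnorm Z * C * 0"
      using g unfolding geo_stable_def by (intro tendsto_intros LIMSEQ_power_zero) auto
    hence "\<bar>Z i $ a $ b\<bar> \<le> cnorm Z * C * 0"
      by (rule LIMSEQ_le_const) (use le in auto)
    thus ?thesis by simp
  qed
  hence "Z i = 0" for i by (simp add: vec_eq_iff)
  thus ?thesis unfolding Z_def by (simp add: fun_eq_iff)
qed

lemma transpose_bilin: "u \<bullet> (transpose X *v w) = w \<bullet> ((X::real^'n^'n) *v u)"
  using dot_mv_transpose[of w X u] by (simp add: inner_commute)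

lemma Lst_transpose: "transpose (Lst p G P i) = Lst p G (\<lambda>j. transpose (P j)) i"
  by (rule mat_eq_bilin) (simp only: transpose_bilin Lst_bilin)

lemma transpose_add': "transpose (X + Y) = transpose X + transpose (Y::real^'n^'m)"
  by (simp add: transpose_def vec_eq_iff)

lemma Psum_symm:
  assumes p: "\<And>i j. p i j \<ge> 0" and g: "geo_stable p G C r" and sV: "\<And>i. transpose (V0 i) = V0 i"
  shows "transpose (Psum p G V0 i) = Psum p G V0 i"
proof -
  have "(\<lambda>j. transpose (Psum p G V0 j)) = Psum p G V0"
  proof (rule lyap_unique[OF p g])
    show "transpose (Psum p G V0 i) = V0 i + Lst p G (\<lambda>j. transpose (Psum p G V0 j)) i" for i
      by (subst Psum_sol[OF p g]) (simp add: transpose_add' sV Lst_transpose)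
    show "Psum p G V0 i = V0 i + Lst p G (Psum p G V0) i" for i by (rule Psum_sol[OF p g])
  qed
  thus ?thesis by (metis)
qed

lemma Psum_qf:
  assumes p: "\<And>i j. p i j \<ge> 0" and g: "geo_stable p G C r"
  shows "(\<lambda>t. x \<bullet> ((Lst p G ^^ t) V0 i *v x)) sums (x \<bullet> (Psum p G V0 i *v x))"
  by (rule sums_bilin[OF Psum_sums[OF p g]])

lemma Psum_psd:
  assumes p: "\<And>i j. p i j \<ge> 0" and g: "geo_stable p G C r" and ps: "\<And>j x. 0 \<le> x \<bullet> (V0 j *v x)"
  shows "0 \<le> x \<bullet> (Psum p G V0 i *v x)"
  by (rule sums_le[OF _ sums_zero Psum_qf[OF p g]]) (rule Lt_psd[OF p ps])


lemma paths0: "paths 0 = (\<lambda>i. [i]) ` UNIV"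
  unfolding paths_def by (auto simp: length_Suc_conv)

lemma pathsSuc: "paths (Suc t) = (\<lambda>(ws, j). ws @ [j]) ` (paths t \<times> UNIV)"
proof
  show "paths (Suc t) \<subseteq> (\<lambda>(ws, j). ws @ [j]) ` (paths t \<times> UNIV)"
  proof
    fix ws assume "ws \<in> paths (Suc t)"
    hence l: "length ws = Suc (Suc t)" unfolding paths_def by simp
    hence "ws = butlast ws @ [last ws]" by (metis append_butlast_last_id list.size(3) nat.simps(3))
    moreover have "butlast ws \<in> paths t" using l unfolding paths_def by simp
    ultimately show "ws \<in> (\<lambda>(ws, j). ws @ [j]) ` (paths t \<times> UNIV)" by force
  qed
  show "(\<lambda>(ws, j). ws @ [j]) ` (paths t \<times> UNIV) \<subseteq> paths (Suc t)" unfolding paths_def by auto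
qed

lemma finite_paths: "finite (paths t :: ('s::finite) list set)"
  unfolding paths_def using finite_lists_length_eq[of "UNIV::'s set" "Suc t"] by simp

lemma path_weight_snoc:
  assumes "length ws = Suc t"
  shows "path_weight p d (ws @ [j]) = path_weight p d ws * p (ws ! t) j"
proof -
  have a: "(ws @ [j]) ! s = ws ! s" if "s < Suc t" for s using that assms by (simp add: nth_append)
  have "(\<Prod>s<Suc t. p ((ws @ [j]) ! s) ((ws @ [j]) ! Suc s)) = (\<Prod>s<t. p (ws ! s) (ws ! Suc s)) * p (ws ! t) j"
    using assms by (simp add: a nth_append)
  thus ?thesis unfolding path_weight_def using assms by (simp add: a nth_append mult_ac)
qed

lemma traj_snoc: "n \<le> length ws \<Longrightarrow> traj G (ws @ [j]) x n = traj G ws x n"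
  by (induction n) (auto simp: nth_append)

lemma path_sum:
  fixes G :: "'s::finite \<Rightarrow> real^'d^'d"
  shows "(\<Sum>ws\<in>paths t. path_weight p d ws * (traj G ws x t \<bullet> (V (ws ! t) *v traj G ws x t)))
         = (\<Sum>i\<in>UNIV. d i * (x \<bullet> ((Lst p G ^^ t) V i *v x)))"
proof (induction t arbitrary: V)
  case 0
  have inj: "inj (\<lambda>i::'s. [i])" by (auto simp: inj_def)
  show ?case unfolding paths0 by (simp add: sum.reindex[OF inj] path_weight_def)
next
  case (Suc t)
  have inj: "inj_on (\<lambda>(ws, j). ws @ [j]) (paths t \<times> (UNIV::'s set))"
    by (auto simp: inj_on_def)
  have "(\<Sum>ws\<in>paths (Suc t). path_weight p d ws * (traj G ws x (Suc t) \<bullet> (V (ws ! Suc t) *v traj G ws x (Suc t))))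
      = (\<Sum>(ws, j)\<in>paths t \<times> UNIV. path_weight p d (ws @ [j]) * (traj G (ws @ [j]) x (Suc t) \<bullet> (V ((ws @ [j]) ! Suc t) *v traj G (ws @ [j]) x (Suc t))))"
    unfolding pathsSuc by (subst sum.reindex[OF inj]) (simp add: case_prod_beta)
  also have "\<dots> = (\<Sum>ws\<in>paths t. \<Sum>j\<in>UNIV. path_weight p d (ws @ [j]) * (traj G (ws @ [j]) x (Suc t) \<bullet> (V ((ws @ [j]) ! Suc t) *v traj G (ws @ [j]) x (Suc t))))"
    by (rule sum.cartesian_product[symmetric])
  also have "\<dots> = (\<Sum>ws\<in>paths t. path_weight p d ws * (traj G ws x t \<bullet> (Lst p G V (ws ! t) *v traj G ws x t)))"
  proof (rule sum.cong[OF refl])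
    fix ws :: "'s list" assume "ws \<in> paths t"
    hence l: "length ws = Suc t" unfolding paths_def by simp
    have tr: "traj G (ws @ [j]) x (Suc t) = G (ws ! t) *v traj G ws x t" for j
      using l traj_snoc[where n=t and ws=ws and G=G and j=j and x=x] by (simp add: nth_append)
    have ix: "(ws @ [j]) ! Suc t = j" for j using l by (simp add: nth_append)
    show "(\<Sum>j\<in>UNIV. path_weight p d (ws @ [j]) * (traj G (ws @ [j]) x (Suc t) \<bullet> (V ((ws @ [j]) ! Suc t) *v traj G (ws @ [j]) x (Suc t))))
        = path_weight p d ws * (traj G ws x t \<bullet> (Lst p G V (ws ! t) *v traj G ws x t))"
      unfolding tr ix path_weight_snoc[OF l] Lst_bilin by (simp add: sum_distrib_left mult_ac)
  qed
  also have "\<dots> = (\<Sum>i\<in>UNIV. d i * (x \<bullet> ((Lst p G ^^ t) (Lst p G V) i *v x)))" by (rule Suc.IH)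
  also have "\<dots> = (\<Sum>i\<in>UNIV. d i * (x \<bullet> ((Lst p G ^^ Suc t) V i *v x)))"
    by (simp only: funpow_Suc_right o_apply)
  finally show ?case .
qed

lemma stable_conv:
  fixes G :: "'s::finite \<Rightarrow> real^'d^'d"
  assumes "ms_stable p G"
  shows "(\<lambda>t. x \<bullet> ((Lst p G ^^ t) (\<lambda>j. mat 1) i *v x)) \<longlonglongrightarrow> 0"
proof -
  define d where "d j = (if j = i then 1 else (0::real))" for j
  have "(\<lambda>t. \<Sum>ws\<in>paths t. path_weight p d ws * (norm (traj G ws x t))\<^sup>2) \<longlonglongrightarrow> 0"
    using assms unfolding ms_stable_def d_def by (auto simp: if_distrib cong: if_cong)
  moreover have "(\<Sum>ws\<in>paths t. path_weight p d ws * (norm (traj G ws x t))\<^sup>2) = x \<bullet> ((Lst p G ^^ t) (\<lambda>j. mat 1) i *v x)" for t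
  proof -
    have dl: "(\<Sum>j\<in>UNIV. d j * f j) = f i" for f :: "'s \<Rightarrow> real"
    proof -
      have "(\<Sum>j\<in>UNIV. d j * f j) = (\<Sum>j\<in>UNIV. if j = i then f j else 0)" by (rule sum.cong) (auto simp: d_def)
      thus ?thesis by simp
    qed
    show ?thesis
      using path_sum[where t=t and p=p and d=d and G=G and x=x and V="\<lambda>j. mat 1"] unfolding dl
      by (simp add: power2_norm_eq_inner)
  qed
  ultimately show ?thesis by simp
qed

lemma stable_geo:
  fixes G :: "'s::finite \<Rightarrow> real^'d^'d"
  assumes p: "\<And>i j. p i j \<ge> 0" and "ms_stable p G"
  shows "\<exists>C r. geo_stable p G C r"
  by (rule geo[OF p stable_conv[OF assms(2)]])


lemma qf_conj:
  fixes Phi :: "real^'n^'m" and C :: "real^'m^'m"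
  shows "(Phi *v x) \<bullet> (C *v (Phi *v x)) = x \<bullet> ((transpose Phi ** C ** Phi) *v x)"
proof -
  have "(transpose Phi ** C ** Phi) *v x = transpose Phi *v (C *v (Phi *v x))"
    by (metis matrix_vector_mul_assoc matrix_mul_assoc)
  moreover have "x \<bullet> (transpose Phi *v y) = (Phi *v x) \<bullet> y" for y
    using dot_mv_transpose[of x "transpose Phi" y] by (simp only: transpose_transpose)
  ultimately show ?thesis by simp
qed

lemma mv_neg: "(R::real^'n^'m) *v (- y) = - (R *v y)"
  by (simp add: matrix_vector_mult_def vec_eq_iff sum_negf)

lemma traj_lin: "\<exists>Phi. \<forall>x. traj G ws x t = Phi *v x"
proof (induction t)
  case 0 show ?case by (rule exI[of _ "mat 1"]) simp
next
  case (Suc t)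
  then obtain Phi where "\<forall>x. traj G ws x t = Phi *v x" by blast
  thus ?case by (intro exI[of _ "G (ws ! t) ** Phi"]) (simp add: matrix_vector_mul_assoc)
qed

context
  fixes M :: "'a measure" and x0 :: "'a \<Rightarrow> real^'d"
  assumes x0_meas: "x0 \<in> borel_measurable M"
    and x0_sq: "\<And>j. integrable M (\<lambda>w. (x0 w $ j)\<^sup>2)"
begin

lemma x0_comp_meas: "(\<lambda>w. x0 w $ a) \<in> borel_measurable M"
proof -
  have "(\<lambda>w. x0 w \<bullet> axis a 1) \<in> borel_measurable M"
    by (intro borel_measurable_inner x0_meas borel_measurable_const)
  thus ?thesis by (simp add: cart_eq_inner_axis[symmetric])
qed

lemma integrable_prod: "integrable M (\<lambda>w. x0 w $ a * x0 w $ b)"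
proof -
  have i1: "integrable M (\<lambda>w. (x0 w $ a)\<^sup>2 + (x0 w $ b)\<^sup>2)" by (intro Bochner_Integration.integrable_add x0_sq)
  have i2: "(\<lambda>w. x0 w $ a * x0 w $ b) \<in> borel_measurable M" by (intro borel_measurable_times x0_comp_meas)
  have i3: "AE w in M. norm (x0 w $ a * x0 w $ b) \<le> norm ((x0 w $ a)\<^sup>2 + (x0 w $ b)\<^sup>2)"
  proof (rule AE_I2)
    fix w
    have "2 * \<bar>x0 w $ a * x0 w $ b\<bar> \<le> (x0 w $ a)\<^sup>2 + (x0 w $ b)\<^sup>2"
      using two_abs_inner[of "x0 w $ a" "x0 w $ b"] by (simp add: power2_eq_square)
    thus "norm (x0 w $ a * x0 w $ b) \<le> norm ((x0 w $ a)\<^sup>2 + (x0 w $ b)\<^sup>2)" by simp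
  qed
  from Bochner_Integration.integrable_bound[OF i1 i2 i3] show ?thesis .
qed

lemma integrable_qf: "integrable M (\<lambda>w. x0 w \<bullet> (W *v x0 w))"
  unfolding qf_expand by (intro Bochner_Integration.integrable_sum Bochner_Integration.integrable_mult_right integrable_prod)

lemma integral_qf: "(\<integral>w. x0 w \<bullet> (W *v x0 w) \<partial>M) = frob W (second_moment M x0)"
proof -
  have "(\<integral>w. x0 w \<bullet> (W *v x0 w) \<partial>M) = (\<Sum>a\<in>UNIV. \<Sum>b\<in>UNIV. W$a$b * (\<integral>w. x0 w $ a * x0 w $ b \<partial>M))"
    unfolding qf_expand
    by (simp add: Bochner_Integration.integral_sum Bochner_Integration.integrable_sum Bochner_Integration.integrable_mult_right integrable_prod)
  thus ?thesis by (simp add: frob_def second_moment_def)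
qed

lemma integral_qf_nonneg: "(\<And>x. 0 \<le> x \<bullet> (W *v x)) \<Longrightarrow> 0 \<le> frob W (second_moment M x0)"
  unfolding integral_qf[symmetric] by (rule integral_nonneg_AE) auto

lemma integral_qf_mono: "(\<And>x. x \<bullet> (W *v x) \<le> x \<bullet> (W' *v x)) \<Longrightarrow> frob W (second_moment M x0) \<le> frob W' (second_moment M x0)"
  unfolding integral_qf[symmetric] by (rule Bochner_Integration.integral_mono[OF integrable_qf integrable_qf]) auto

lemma cost_term:
  fixes G :: "'s::finite \<Rightarrow> real^'d^'d"
  shows "(\<Sum>ws\<in>paths t. path_weight p pini ws * (\<integral>w. traj G ws (x0 w) t \<bullet> (V (ws ! t) *v traj G ws (x0 w) t) \<partial>M))
    = (\<Sum>i\<in>UNIV. pini i * frob ((Lst p G ^^ t) V i) (second_moment M x0))"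
proof -
  have int: "integrable M (\<lambda>w. traj G ws (x0 w) t \<bullet> (V (ws ! t) *v traj G ws (x0 w) t))" for ws
  proof -
    obtain Phi where Phi: "\<forall>x. traj G ws x t = Phi *v x" using traj_lin by blast
    show ?thesis unfolding Phi[rule_format] qf_conj by (rule integrable_qf)
  qed
  have "(\<Sum>ws\<in>paths t. path_weight p pini ws * (\<integral>w. traj G ws (x0 w) t \<bullet> (V (ws ! t) *v traj G ws (x0 w) t) \<partial>M))
      = (\<integral>w. (\<Sum>ws\<in>paths t. path_weight p pini ws * (traj G ws (x0 w) t \<bullet> (V (ws ! t) *v traj G ws (x0 w) t))) \<partial>M)"
    by (simp add: Bochner_Integration.integral_sum Bochner_Integration.integrable_mult_right int)
  also have "\<dots> = (\<integral>w. (\<Sum>i\<in>UNIV. pini i * (x0 w \<bullet> ((Lst p G ^^ t) V i *v x0 w))) \<partial>M)"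
    by (simp only: path_sum)
  also have "\<dots> = (\<Sum>i\<in>UNIV. pini i * frob ((Lst p G ^^ t) V i) (second_moment M x0))"
    by (simp add: Bochner_Integration.integral_sum Bochner_Integration.integrable_mult_right integrable_qf integral_qf)
  finally show ?thesis .
qed

lemma cost_eq:
  fixes pini :: "'s::finite \<Rightarrow> real"
  shows "mjls_cost M x0 pini p A B Q R K =
    (\<Sum>t. ereal (\<Sum>i\<in>UNIV. pini i * frob ((Lst p (Gam A B K) ^^ t) (\<lambda>i. Q i + transpose (K i) ** R i ** K i) i) (second_moment M x0)))"
proof -
  have integrand: "(let x = traj (Gam A B K) ws (x0 w) t; u = - (K (ws ! t) *v x)
               in x \<bullet> (Q (ws ! t) *v x) + u \<bullet> (R (ws ! t) *v u))
     = traj (Gam A B K) ws (x0 w) t \<bullet> ((Q (ws ! t) + transpose (K (ws ! t)) ** R (ws ! t) ** K (ws ! t)) *v traj (Gam A B K) ws (x0 w) t)"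
    for ws t w
    by (simp add: Let_def mv_neg matrix_vector_mult_add_rdistrib inner_add_right qf_conj[symmetric])
  show ?thesis
    unfolding mjls_cost_def integrand
    by (simp only: cost_term[where V="\<lambda>i. Q i + transpose (K i) ** R i ** K i"])
qed

end


definition Jc :: "'a measure \<Rightarrow> ('a \<Rightarrow> real^'d) \<Rightarrow> ('s::finite \<Rightarrow> real) \<Rightarrow> ('s \<Rightarrow> 's \<Rightarrow> real)
   \<Rightarrow> ('s \<Rightarrow> real^'d^'d) \<Rightarrow> ('s \<Rightarrow> real^'d^'d) \<Rightarrow> nat \<Rightarrow> real" where
  "Jc M x0 pini p G V t = (\<Sum>i\<in>UNIV. pini i * frob ((Lst p G ^^ t) V i) (second_moment M x0))"

lemma frob_trace: "frob X Y = trace (transpose X ** (Y::real^'n^'n))"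
  by (simp add: frob_def trace_def matrix_matrix_mult_def transpose_def) (rule sum.swap)

lemma frob_conj: "frob (transpose G ** E ** G) Y = frob E (G ** Y ** transpose (G::real^'n^'n))"
proof -
  have "frob (transpose G ** E ** G) Y = trace (transpose G ** (transpose E ** G ** Y))"
    unfolding frob_trace by (simp add: matrix_transpose_mul matrix_mul_assoc)
  also have "\<dots> = trace ((transpose E ** G ** Y) ** transpose G)" by (rule trace_mul_sym)
  also have "\<dots> = frob E (G ** Y ** transpose G)"
    unfolding frob_trace by (simp add: matrix_mul_assoc)
  finally show ?thesis .
qed

lemma Lst_adj:
  "(\<Sum>i\<in>UNIV. frob (Lst p G V i) (Y i)) = (\<Sum>j\<in>UNIV. frob (V j) (Top p G Y j))"
proof -
  have "(\<Sum>i\<in>UNIV. frob (Lst p G V i) (Y i)) = (\<Sum>i\<in>UNIV. \<Sum>j\<in>UNIV. p i j * frob (V j) (G i ** Y i ** transpose (G i)))"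
    unfolding Lst_def frob_conj Eop_def frob_sum_left frob_scaleR_left ..
  also have "\<dots> = (\<Sum>j\<in>UNIV. \<Sum>i\<in>UNIV. p i j * frob (V j) (G i ** Y i ** transpose (G i)))"
    by (rule sum.swap)
  also have "\<dots> = (\<Sum>j\<in>UNIV. frob (V j) (Top p G Y j))"
    unfolding Top_def frob_sum_right frob_scaleR_right ..
  finally show ?thesis .
qed

lemma J_Top: "Jc M x0 pini p G V t = (\<Sum>i\<in>UNIV. frob (V i) ((Top p G ^^ t) (X0 M x0 pini) i))"
proof (induction t arbitrary: V)
  case 0 show ?case unfolding Jc_def X0_def by (simp add: frob_scaleR_right mult_ac)
next
  case (Suc t)
  have "Jc M x0 pini p G V (Suc t) = Jc M x0 pini p G (Lst p G V) t"
    unfolding Jc_def by (simp only: funpow_Suc_right o_apply)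
  also have "\<dots> = (\<Sum>i\<in>UNIV. frob (Lst p G V i) ((Top p G ^^ t) (X0 M x0 pini) i))" by (rule Suc.IH)
  also have "\<dots> = (\<Sum>j\<in>UNIV. frob (V j) ((Top p G ^^ Suc t) (X0 M x0 pini) j))"
    unfolding Lst_adj by simp
  finally show ?case .
qed

lemma sums_frob:
  fixes f :: "nat \<Rightarrow> real^'n^'m"
  assumes "f sums s"
  shows "(\<lambda>t. frob D (f t)) sums frob D s"
  unfolding frob_def by (intro sums_sum sums_mult sums_vec_nth assms)

lemma neg_mv: "(- Y) *v x = - ((Y::real^'n^'m) *v x)"
  by (simp add: matrix_vector_mult_def vec_eq_iff sum_negf)

lemma frob_uminus_left: "frob (- X) Z = - frob X Z"
  by (simp add: frob_def sum_negf)

lemma J_Suc: "Jc M x0 pini p G V (Suc t) = Jc M x0 pini p G (Lst p G V) t"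
  unfolding Jc_def by (simp only: funpow_Suc_right o_apply)

lemma J_0: "Jc M x0 pini p G V 0 = Jc M x0 pini p G' V 0"
  unfolding Jc_def by simp

context
  fixes M :: "'a measure" and x0 :: "'a \<Rightarrow> real^'d" and pini :: "'s::finite \<Rightarrow> real" and p :: "'s \<Rightarrow> 's \<Rightarrow> real"
  assumes x0_meas: "x0 \<in> borel_measurable M"
    and x0_sq: "\<And>j. integrable M (\<lambda>w. (x0 w $ j)\<^sup>2)"
    and p_nn: "\<And>i j. p i j \<ge> 0" and pini_nn: "\<And>i. pini i \<ge> 0"
begin

lemma J_le:
  assumes "\<And>j x. x \<bullet> (V j *v x) \<le> x \<bullet> (W j *v x)"
  shows "Jc M x0 pini p G V t \<le> Jc M x0 pini p G W t"
  unfolding Jc_def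
  by (intro sum_mono mult_left_mono pini_nn integral_qf_mono[OF x0_meas x0_sq] Lt_qf_mono[OF p_nn] assms)

lemma J_eq:
  assumes "\<And>j x. x \<bullet> (V j *v x) = x \<bullet> (W j *v x)"
  shows "Jc M x0 pini p G V t = Jc M x0 pini p G W t"
  using J_le[of V W G t] J_le[of W V G t] assms by (simp add: order_antisym)

lemma J_nonneg:
  assumes "\<And>j x. 0 \<le> x \<bullet> (V j *v x)"
  shows "0 \<le> Jc M x0 pini p G V t"
  unfolding Jc_def
  by (intro sum_nonneg mult_nonneg_nonneg pini_nn integral_qf_nonneg[OF x0_meas x0_sq] Lt_psd[OF p_nn] assms)

lemma J_add: "Jc M x0 pini p G (\<lambda>j. V j + W j) t = Jc M x0 pini p G V t + Jc M x0 pini p G W t"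
proof -
  have "frob ((Lst p G ^^ t) (\<lambda>j. V j + W j) i) (second_moment M x0)
     = frob ((Lst p G ^^ t) V i) (second_moment M x0) + frob ((Lst p G ^^ t) W i) (second_moment M x0)" for i
    unfolding integral_qf[OF x0_meas x0_sq, symmetric] Lt_qf_add
    by (rule Bochner_Integration.integral_add[OF integrable_qf[OF x0_meas x0_sq] integrable_qf[OF x0_meas x0_sq]])
  thus ?thesis unfolding Jc_def by (simp add: sum.distrib[symmetric] algebra_simps)
qed

lemma J_scale: "Jc M x0 pini p G (\<lambda>j. c *\<^sub>R V j) t = c * Jc M x0 pini p G V t"
proof -
  have "frob ((Lst p G ^^ t) (\<lambda>j. c *\<^sub>R V j) i) (second_moment M x0)
     = c * frob ((Lst p G ^^ t) V i) (second_moment M x0)" for i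
    unfolding integral_qf[OF x0_meas x0_sq, symmetric] Lt_qf_scale by simp
  thus ?thesis unfolding Jc_def by (simp add: sum_distrib_left algebra_simps)
qed

definition m2 where "m2 = (\<Sum>i\<in>UNIV. pini i * frob (mat 1) (second_moment M x0))"

lemma m2_nonneg: "0 \<le> m2"
  unfolding m2_def
  by (intro sum_nonneg mult_nonneg_nonneg pini_nn integral_qf_nonneg[OF x0_meas x0_sq]) simp

lemma frob_abs_bound:
  assumes "\<And>x. \<bar>x \<bullet> (X *v x)\<bar> \<le> c * (x \<bullet> x)"
  shows "\<bar>frob X (second_moment M x0)\<bar> \<le> c * frob (mat 1) (second_moment M x0)"
proof -
  have "frob X (second_moment M x0) \<le> frob (c *\<^sub>R mat 1) (second_moment M x0)"
    by (rule integral_qf_mono[OF x0_meas x0_sq]) (use assms in \<open>auto simp: scaleR_matrix_vector_assoc[symmetric] abs_le_iff\<close>)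
  moreover have "frob ((-c) *\<^sub>R mat 1) (second_moment M x0) \<le> frob X (second_moment M x0)"
  proof (rule integral_qf_mono[OF x0_meas x0_sq])
    fix x :: "real^'d"
    have "x \<bullet> (((-c) *\<^sub>R mat 1) *v x) = - (c * (x \<bullet> x))"
    proof -
      have h: "((-c) *\<^sub>R mat 1) *v x = (-c) *\<^sub>R x"
        using scaleR_matrix_vector_assoc[of "-c" "mat 1 :: real^'d^'d" x] by simp
      show ?thesis unfolding h by simp
    qed
    moreover have "- (c * (x \<bullet> x)) \<le> x \<bullet> (X *v x)" using assms[of x] by (simp add: abs_le_iff)
    ultimately show "x \<bullet> (((-c) *\<^sub>R mat 1) *v x) \<le> x \<bullet> (X *v x)" by simp
  qed
  ultimately show ?thesis by (simp add: frob_scaleR_left frob_uminus_left)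
qed

lemma J_geo:
  assumes g: "geo_stable p G C r"
  shows "\<bar>Jc M x0 pini p G V t\<bar> \<le> cnorm V * C * r ^ t * m2"
proof -
  have "\<bar>Jc M x0 pini p G V t\<bar> \<le> (\<Sum>i\<in>UNIV. \<bar>pini i * frob ((Lst p G ^^ t) V i) (second_moment M x0)\<bar>)"
    unfolding Jc_def by (rule sum_abs)
  also have "\<dots> \<le> (\<Sum>i\<in>UNIV. pini i * (cnorm V * C * r ^ t * frob (mat 1) (second_moment M x0)))"
    by (intro sum_mono) (simp add: abs_mult pini_nn mult_left_mono frob_abs_bound geo_qf[OF p_nn g] abs_of_nonneg)
  also have "\<dots> = cnorm V * C * r ^ t * m2" unfolding m2_def by (simp add: sum_distrib_left mult_ac)
  finally show ?thesis .
qed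

lemma J_summable:
  assumes g: "geo_stable p G C r"
  shows "summable (Jc M x0 pini p G V)"
proof (rule summable_comparison_test)
  show "\<exists>N. \<forall>n\<ge>N. norm (Jc M x0 pini p G V n) \<le> (cnorm V * C * m2) * r ^ n"
    using J_geo[OF g] by (auto simp: mult_ac)
  show "summable (\<lambda>n. (cnorm V * C * m2) * r ^ n)"
    using g unfolding geo_stable_def by (intro summable_mult summable_geometric) auto
qed

lemma J_lim0:
  assumes g: "geo_stable p G C r"
  shows "Jc M x0 pini p G V \<longlonglongrightarrow> 0"
  by (rule summable_LIMSEQ_zero[OF J_summable[OF g]])

lemma Top_summable:
  assumes g: "geo_stable p G C r"
  shows "summable (\<lambda>t. (Top p G ^^ t) (X0 M x0 pini) i)"
proof (rule summable_mat)
  fix t a b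
  define E where "E j = (if j = i then (\<chi> c e. if c = a \<and> e = b then 1 else 0) else (0::real^'d^'d))" for j
  have "Jc M x0 pini p G E t = (\<Sum>j\<in>UNIV. frob (E j) ((Top p G ^^ t) (X0 M x0 pini) j))" by (rule J_Top)
  also have "\<dots> = frob (E i) ((Top p G ^^ t) (X0 M x0 pini) i)"
    by (subst sum.remove[of _ i]) (auto simp: E_def)
  also have "\<dots> = (Top p G ^^ t) (X0 M x0 pini) i $ a $ b"
  proof -
    have "frob (E i) Y = (\<Sum>c\<in>UNIV. \<Sum>e\<in>UNIV. if c = a \<and> e = b then Y $ c $ e else 0)" for Y :: "real^'d^'d"
      unfolding frob_def E_def by (intro sum.cong refl) auto
    moreover have "(\<Sum>c\<in>UNIV. \<Sum>e\<in>UNIV. if c = a \<and> e = b then Y $ c $ e else 0) = Y $ a $ b" for Y :: "real^'d^'d"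
    proof -
      have "(\<Sum>e\<in>UNIV. if c = a \<and> e = b then Y $ c $ e else 0) = (if c = a then Y $ c $ b else 0)" for c
        by (cases "c = a") simp_all
      thus ?thesis by simp
    qed
    ultimately show ?thesis by simp
  qed
  finally have e: "(Top p G ^^ t) (X0 M x0 pini) i $ a $ b = Jc M x0 pini p G E t" ..
  show "\<bar>(Top p G ^^ t) (X0 M x0 pini) i $ a $ b\<bar> \<le> (\<Sum>a\<in>UNIV. \<Sum>b\<in>UNIV. cnorm (\<lambda>j. (if j = i then (\<chi> c e. if c = a \<and> e = b then 1 else 0) else (0::real^'d^'d))) * C * m2) * r ^ t"
  proof -
    have "\<bar>Jc M x0 pini p G E t\<bar> \<le> cnorm E * C * r ^ t * m2" by (rule J_geo[OF g])
    also have "\<dots> = (cnorm E * C * m2) * r ^ t" by simp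
    also have "\<dots> \<le> (\<Sum>a\<in>UNIV. \<Sum>b\<in>UNIV. cnorm (\<lambda>j. (if j = i then (\<chi> c e. if c = a \<and> e = b then 1 else 0) else (0::real^'d^'d))) * C * m2) * r ^ t"
      apply (rule mult_right_mono)
       apply (rule order_trans[OF _ member_le_sum[of a]])
         apply (rule order_trans[OF _ member_le_sum[of b]])
      using g m2_nonneg cnorm_nonneg unfolding geo_stable_def E_def
      by (auto intro!: sum_nonneg mult_nonneg_nonneg)
    finally show ?thesis unfolding e .
  qed
  show "summable (\<lambda>t. (\<Sum>a\<in>UNIV. \<Sum>b\<in>UNIV. cnorm (\<lambda>j. (if j = i then (\<chi> c e. if c = a \<and> e = b then 1 else 0) else (0::real^'d^'d))) * C * m2) * r ^ t)"
    using g unfolding geo_stable_def by (intro summable_mult summable_geometric) auto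
qed

lemma J_XK:
  assumes g: "geo_stable p (Gam A B K) C r"
  shows "Jc M x0 pini p (Gam A B K) V sums (\<Sum>i\<in>UNIV. frob (V i) (XK M x0 pini p A B K i))"
  unfolding J_Top[abs_def] XK_def
  by (intro sums_sum sums_frob summable_sums Top_summable[OF g])

end


lemma posdef_symm: "posdef S \<Longrightarrow> symm S"
  unfolding posdef_def symm_def by simp

lemma posdef_psd: "posdef S \<Longrightarrow> 0 \<le> x \<bullet> (S *v x)"
  unfolding posdef_def by (cases "x = 0") (auto intro: less_imp_le)

lemma bil_conj:
  fixes X :: "real^'n^'m" and C :: "real^'m^'m" and Y :: "real^'p^'m"
  shows "u \<bullet> ((transpose X ** C ** Y) *v w) = (X *v u) \<bullet> (C *v (Y *v w))"
proof -
  have "(transpose X ** C ** Y) *v w = transpose X *v (C *v (Y *v w))"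
    by (metis matrix_vector_mul_assoc matrix_mul_assoc)
  moreover have "u \<bullet> (transpose X *v y) = (X *v u) \<bullet> y" for y
    using dot_mv_transpose[of u "transpose X" y] by (simp only: transpose_transpose)
  ultimately show ?thesis by simp
qed

lemma pd_inverse:
  fixes S :: "real^'n^'n"
  assumes pd: "\<And>z. z \<noteq> 0 \<Longrightarrow> 0 < z \<bullet> (S *v z)"
  shows "S ** matrix_inv S = mat 1"
proof -
  have "inj ((*v) S)"
  proof (rule injI)
    fix x y assume "S *v x = S *v y"
    hence "S *v (x - y) = 0" by (simp add: matrix_vector_mult_diff_distrib)
    hence "(x - y) \<bullet> (S *v (x - y)) = 0" by simp
    with pd[of "x - y"] show "x = y" by (cases "x - y = 0") auto
  qed
  then obtain B' where "B' ** S = mat 1" using matrix_left_invertible_injective by blast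
  hence "S ** B' = mat 1 \<and> B' ** S = mat 1" using matrix_left_right_inverse by blast
  hence "\<exists>A'. S ** A' = mat 1 \<and> A' ** S = mat 1" by blast
  hence "S ** matrix_inv S = mat 1 \<and> matrix_inv S ** S = mat 1"
    unfolding matrix_inv_def by (rule someI_ex)
  thus ?thesis by simp
qed

lemma sigma_min_bound:
  fixes S :: "real^'n^'n"
  assumes pd: "posdef S"
  shows "0 \<le> sigma_min S" "sigma_min S * (m \<bullet> m) \<le> m \<bullet> (S *v m)"
proof -
  obtain v where nv: "norm v = 1" and ev: "S *v v = (v \<bullet> (S *v v)) *\<^sub>R v"
    and bd: "\<forall>w. (v \<bullet> (S *v v)) * (w \<bullet> w) \<le> w \<bullet> (S *v w)"
    using min_eig[OF posdef_symm[OF pd]] by blast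
  define l where "l = v \<bullet> (S *v v)"
  have l0: "0 \<le> l" unfolding l_def by (rule posdef_psd[OF pd])
  have nS: "norm (S *v v) = l" using ev nv l0 unfolding l_def[symmetric] by simp
  have ne: "{norm (S *v v) |v. norm v = 1} \<noteq> {}" using nv by blast
  have bb: "bdd_below {norm (S *v v) |v. norm v = 1}" by (rule bdd_belowI[of _ 0]) auto
  have "sigma_min S \<le> norm (S *v v)" unfolding sigma_min_def
    by (rule cInf_lower[OF _ bb]) (use nv in blast)
  hence sl: "sigma_min S \<le> l" using nS by simp
  show "0 \<le> sigma_min S" unfolding sigma_min_def by (rule cInf_greatest[OF ne]) auto
  have "sigma_min S * (m \<bullet> m) \<le> l * (m \<bullet> m)" by (rule mult_right_mono[OF sl]) simp
  also have "\<dots> \<le> m \<bullet> (S *v m)" using bd unfolding l_def by blast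
  finally show "sigma_min S * (m \<bullet> m) \<le> m \<bullet> (S *v m)" .
qed

lemma specnorm_bound: "m \<bullet> ((X::real^'n^'n) *v m) \<le> specnorm X * (m \<bullet> m)"
proof -
  have "m \<bullet> (X *v m) \<le> norm m * norm (X *v m)" using Cauchy_Schwarz_ineq2[of m "X *v m"] by simp
  also have "\<dots> \<le> norm m * (specnorm X * norm m)"
    unfolding specnorm_def by (rule mult_left_mono[OF onorm[OF matrix_vector_mul_bounded_linear]]) simp
  also have "\<dots> = specnorm X * (m \<bullet> m)" by (simp add: power2_norm_eq_inner[symmetric] power2_eq_square mult_ac)
  finally show ?thesis .
qed

lemma specnorm_le_maxnorm: "specnorm (V i) \<le> maxnorm (V::'s::finite \<Rightarrow> real^'n^'m)"
  unfolding maxnorm_def by (rule Max_ge) auto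

lemma maxnorm_nonneg: "0 \<le> maxnorm (V::'s::finite \<Rightarrow> real^'n^'m)"
  by (rule order_trans[OF _ specnorm_le_maxnorm[of V undefined]]) (simp add: specnorm_def onorm_pos_le)

lemma quad_id:
  fixes R :: "real^'k^'k" and E :: "real^'d^'d" and B :: "real^'k^'d"
  assumes sR: "symm R" and sE: "symm E"
  shows "(k + d) \<bullet> (R *v (k + d)) - k \<bullet> (R *v k) + (a - B *v (k + d)) \<bullet> (E *v (a - B *v (k + d)))
      - (a - B *v k) \<bullet> (E *v (a - B *v k))
   = d \<bullet> (R *v d) + (B *v d) \<bullet> (E *v (B *v d)) + 2 * (d \<bullet> (R *v k) + (B *v d) \<bullet> (E *v (B *v k)) - (B *v d) \<bullet> (E *v a))"
proof -
  have s1: "k \<bullet> (R *v d) = d \<bullet> (R *v k)" by (rule symm_swap[OF sR])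
  have s2: "a \<bullet> (E *v (B *v d)) = (B *v d) \<bullet> (E *v a)" by (rule symm_swap[OF sE])
  have s3: "(B *v k) \<bullet> (E *v (B *v d)) = (B *v d) \<bullet> (E *v (B *v k))" by (rule symm_swap[OF sE])
  show ?thesis
    by (simp add: matrix_vector_right_distrib matrix_vector_mult_diff_distrib inner_add_left inner_add_right
        inner_diff_left inner_diff_right s1 s2 s3 algebra_simps)
qed

lemma gain_identity:
  fixes A :: "real^'d^'d" and B :: "real^'k^'d" and Q :: "real^'d^'d" and R :: "real^'k^'k"
    and K Kb :: "real^'d^'k" and E :: "real^'d^'d"
  assumes sR: "symm R" and sE: "symm E"
  shows "x \<bullet> ((Q + transpose Kb ** R ** Kb) *v x) + ((A - B ** Kb) *v x) \<bullet> (E *v ((A - B ** Kb) *v x))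
    - (x \<bullet> ((Q + transpose K ** R ** K) *v x) + ((A - B ** K) *v x) \<bullet> (E *v ((A - B ** K) *v x)))
    = (Kb *v x - K *v x) \<bullet> ((R + transpose B ** E ** B) *v (Kb *v x - K *v x))
      + 2 * ((Kb *v x - K *v x) \<bullet> (((R + transpose B ** E ** B) ** K - transpose B ** E ** A) *v x))"
proof -
  define k where "k = K *v x"
  define d where "d = Kb *v x - K *v x"
  define a where "a = A *v x"
  have k2: "Kb *v x = k + d" unfolding k_def d_def by simp
  have g2: "(A - B ** Kb) *v x = a - B *v (k + d)"
    unfolding a_def k2[symmetric] by (simp add: matrix_vector_mult_diff_rdistrib matrix_vector_mul_assoc)
  have g1: "(A - B ** K) *v x = a - B *v k"
    unfolding a_def k_def by (simp add: matrix_vector_mult_diff_rdistrib matrix_vector_mul_assoc)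
  have q2: "x \<bullet> ((Q + transpose Kb ** R ** Kb) *v x) = x \<bullet> (Q *v x) + (k + d) \<bullet> (R *v (k + d))"
    unfolding k2[symmetric] by (simp add: matrix_vector_mult_add_rdistrib inner_add_right qf_conj)
  have q1: "x \<bullet> ((Q + transpose K ** R ** K) *v x) = x \<bullet> (Q *v x) + k \<bullet> (R *v k)"
    unfolding k_def by (simp add: matrix_vector_mult_add_rdistrib inner_add_right qf_conj)
  have r1: "d \<bullet> ((R + transpose B ** E ** B) *v d) = d \<bullet> (R *v d) + (B *v d) \<bullet> (E *v (B *v d))"
    by (simp add: matrix_vector_mult_add_rdistrib inner_add_right bil_conj)
  have r2: "d \<bullet> (((R + transpose B ** E ** B) ** K - transpose B ** E ** A) *v x)
      = d \<bullet> (R *v k) + (B *v d) \<bullet> (E *v (B *v k)) - (B *v d) \<bullet> (E *v a)"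
  proof -
    have "((R + transpose B ** E ** B) ** K - transpose B ** E ** A) *v x
        = (R + transpose B ** E ** B) *v k - (transpose B ** E ** A) *v x"
      unfolding k_def by (simp add: matrix_vector_mult_diff_rdistrib matrix_vector_mul_assoc)
    thus ?thesis unfolding a_def
      by (simp add: inner_diff_right matrix_vector_mult_add_rdistrib inner_add_right bil_conj)
  qed
  show ?thesis
    unfolding g1 g2 q1 q2 d_def[symmetric] r1 r2 using quad_id[OF sR sE, of k d a B] by simp
qed


theorem lemma7:
  fixes M :: "'a measure" and x0 :: "'a \<Rightarrow> real^'d"
    and pini :: "'s::finite \<Rightarrow> real" and p :: "'s \<Rightarrow> 's \<Rightarrow> real"
    and A :: "'s \<Rightarrow> real^'d^'d" and B :: "'s \<Rightarrow> real^'k^'d"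
    and Q :: "'s \<Rightarrow> real^'d^'d" and R :: "'s \<Rightarrow> real^'k^'k"
    and K Kstar :: "'s \<Rightarrow> real^'d^'k" and eta :: real
  assumes M: "prob_space M"
    and x0_meas: "x0 \<in> borel_measurable M"
    and x0_sq: "\<And>j. integrable M (\<lambda>w. (x0 w $ j)\<^sup>2)"
    and x0_pd: "posdef (second_moment M x0)"
    and p_nonneg: "\<And>i j. p i j \<ge> 0" and p_stoch: "\<And>i. (\<Sum>j\<in>UNIV. p i j) = 1"
    and pi_pos: "\<And>i. pini i > 0" and pi_sum: "(\<Sum>i\<in>UNIV. pini i) = 1"
    and stabilizable: "stab_set p A B \<noteq> {}"
    and Q_pd: "\<And>i. posdef (Q i)" and R_pd: "\<And>i. posdef (R i)"
    and Kstar_stab: "Kstar \<in> stab_set p A B"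
    and Kstar_opt: "\<And>K'. K' \<in> stab_set p A B \<Longrightarrow>
                      mjls_cost M x0 pini p A B Q R Kstar \<le> mjls_cost M x0 pini p A B Q R K'"
    and K_stab: "K \<in> stab_set p A B"
    and eta: "0 < eta" "eta \<le> 1/2"
  shows "mjls_cost M x0 pini p A B Q R
           (\<lambda>i. K i - (2 * eta) *\<^sub>R (matrix_inv (R i + transpose (B i) ** Eop p (PK p A B Q R K) i ** B i)
                                      ** LK p A B Q R K i))
         - mjls_cost M x0 pini p A B Q R Kstar
       \<le> ereal (1 - 2 * mu_const M x0 pini / maxnorm (XK M x0 pini p A B Kstar) * eta)
         * (mjls_cost M x0 pini p A B Q R K - mjls_cost M x0 pini p A B Q R Kstar)"
proof -
  note p = p_nonneg
  have pini_nn: "\<And>i. 0 \<le> pini i" using pi_pos less_imp_le by blast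
  note Jadd = J_add[OF x0_meas x0_sq p_nonneg pini_nn]
  note Jscale = J_scale[OF x0_meas x0_sq p_nonneg pini_nn]
  note Jle = J_le[OF x0_meas x0_sq p_nonneg pini_nn]
  note Jeq = J_eq[OF x0_meas x0_sq p_nonneg pini_nn]
  note Jnn = J_nonneg[OF x0_meas x0_sq p_nonneg pini_nn]
  define G where "G = Gam A B K"
  define Gs where "Gs = Gam A B Kstar"
  define Cst where "Cst K2 i = Q i + transpose (K2 i) ** R i ** K2 i" for K2 :: "'s \<Rightarrow> real^'d^'k" and i
  define S0 where "S0 = second_moment M x0"
  have sR: "\<And>i. symm (R i)" using R_pd posdef_symm by blast
  have sQ: "\<And>i. symm (Q i)" using Q_pd posdef_symm by blast
  obtain C r where g: "geo_stable p G C r"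
    using stable_geo[where p=p, OF p] K_stab unfolding stab_set_def G_def by blast
  obtain Cs rs where gs: "geo_stable p Gs Cs rs"
    using stable_geo[where p=p, OF p] Kstar_stab unfolding stab_set_def Gs_def by blast
  have Cst_psd: "0 \<le> x \<bullet> (Cst K2 j *v x)" for K2 j x
  proof -
    have "x \<bullet> (Cst K2 j *v x) = x \<bullet> (Q j *v x) + (K2 j *v x) \<bullet> (R j *v (K2 j *v x))"
      unfolding Cst_def by (simp add: matrix_vector_mult_add_rdistrib inner_add_right qf_conj)
    thus ?thesis using posdef_psd[OF Q_pd[of j], where x=x] posdef_psd[OF R_pd[of j], where x="K2 j *v x"] by simp
  qed
  have Cst_sym: "transpose (Cst K2 i) = Cst K2 i" for K2 i
    using sQ[of i] sR[of i] unfolding Cst_def symm_def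
    by (simp add: transpose_add' matrix_transpose_mul matrix_mul_assoc)
  define P where "P = Psum p G (Cst K)"
  have Psol: "P i = Cst K i + Lst p G P i" for i unfolding P_def by (rule Psum_sol[OF p g])
  have Psym: "transpose (P i) = P i" for i unfolding P_def by (rule Psum_symm[OF p g Cst_sym])
  have Ppsd: "0 \<le> x \<bullet> (P i *v x)" for i x unfolding P_def by (rule Psum_psd[OF p g Cst_psd])
  have PK: "PK p A B Q R K = P"
  proof -
    have ex1: "\<exists>!P'. \<forall>i. P' i = Cst K i + Lst p G P' i"
    proof (rule ex1I[of _ P])
      show "\<forall>i. P i = Cst K i + Lst p G P i" using Psol by blast
      fix P' assume "\<forall>i. P' i = Cst K i + Lst p G P' i"
      thus "P' = P" by (intro lyap_unique[OF p g]) (auto intro: Psol)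
    qed
    have "(THE P'. \<forall>i. P' i = Cst K i + Lst p G P' i) = P" by (rule the1_equality[OF ex1]) (use Psol in blast)
    thus ?thesis unfolding PK_def Cst_def Lst_def G_def by simp
  qed
  have Pswap: "w \<bullet> (P j *v u) = u \<bullet> (P j *v w)" for j u w
    using symm_swap[of "P j"] Psym[of j] unfolding symm_def by blast
  define E where "E i = Eop p P i" for i
  have Esym: "symm (E i)" for i
    unfolding symm_def
  proof (rule mat_eq_bilin)
    fix u w
    have "u \<bullet> (transpose (E i) *v w) = w \<bullet> (E i *v u)" by (rule transpose_bilin)
    also have "\<dots> = (\<Sum>j\<in>UNIV. p i j * (w \<bullet> (P j *v u)))" unfolding E_def Eop_mv by (simp add: inner_sum_right)
    also have "\<dots> = (\<Sum>j\<in>UNIV. p i j * (u \<bullet> (P j *v w)))" by (simp add: Pswap[where u=u and w=w])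
    also have "\<dots> = u \<bullet> (E i *v w)" unfolding E_def Eop_mv by (simp add: inner_sum_right)
    finally show "u \<bullet> (transpose (E i) *v w) = u \<bullet> (E i *v w)" .
  qed
  have Epsd: "0 \<le> x \<bullet> (E i *v x)" for i x
    unfolding E_def Eop_mv by (simp add: inner_sum_right sum_nonneg p Ppsd)
  define Psi where "Psi i = R i + transpose (B i) ** E i ** B i" for i
  have Psi_sym: "symm (Psi i)" for i
    using sR[of i] Esym[of i] unfolding Psi_def symm_def
    by (simp add: transpose_add' matrix_transpose_mul matrix_mul_assoc)
  have Psi_qf: "z \<bullet> (Psi i *v z) = z \<bullet> (R i *v z) + (B i *v z) \<bullet> (E i *v (B i *v z))" for i z
    unfolding Psi_def by (simp add: matrix_vector_mult_add_rdistrib inner_add_right bil_conj)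
  have Psi_pd: "z \<noteq> 0 \<Longrightarrow> 0 < z \<bullet> (Psi i *v z)" for i z
    using R_pd[of i] Epsd[where i=i and x="B i *v z"] unfolding Psi_qf posdef_def
    by (metis add_pos_nonneg)
  have Psi_psd: "0 \<le> z \<bullet> (Psi i *v z)" for i z
    using Psi_pd[where z=z and i=i] by (cases "z = 0") auto
  define Pinv where "Pinv i = matrix_inv (Psi i)" for i
  have PPinv: "Psi i ** Pinv i = mat 1" for i
    unfolding Pinv_def by (rule pd_inverse) (rule Psi_pd)
  have Pinv: "Psi i *v (Pinv i *v y) = y" for i y
    by (simp add: matrix_vector_mul_assoc PPinv)
  define L where "L i = LK p A B Q R K i" for i
  have L_eq: "L i = Psi i ** K i - transpose (B i) ** E i ** A i" for i
    unfolding L_def LK_def Let_def PK Psi_def E_def by simp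
  define Kp where "Kp i = K i - (2 * eta) *\<^sub>R (Pinv i ** L i)" for i
  have Kp_eq: "(\<lambda>i. K i - (2 * eta) *\<^sub>R (matrix_inv (R i + transpose (B i) ** Eop p (PK p A B Q R K) i ** B i)
                                      ** LK p A B Q R K i)) = Kp"
    unfolding Kp_def Pinv_def Psi_def E_def L_def PK by simp
  define Gp where "Gp = Gam A B Kp"
  define Dm where "Dm i = transpose (L i) ** Pinv i ** L i" for i
  define D where "D i = (1/2) *\<^sub>R (Dm i + transpose (Dm i))" for i
  have Dqf: "x \<bullet> (D i *v x) = (L i *v x) \<bullet> (Pinv i *v (L i *v x))" for i x
  proof -
    have "x \<bullet> (transpose (Dm i) *v x) = x \<bullet> (Dm i *v x)" by (rule transpose_bilin)
    moreover have "x \<bullet> (Dm i *v x) = (L i *v x) \<bullet> (Pinv i *v (L i *v x))" unfolding Dm_def qf_conj ..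
    ultimately show ?thesis unfolding D_def
      by (simp add: scaleR_matrix_vector_assoc[symmetric] matrix_vector_mult_add_rdistrib inner_add_right)
  qed
  have Dsym: "symm (D i)" for i
    unfolding symm_def D_def by (simp add: transpose_scalar transpose_add' add.commute)
  have Dpsd0: "0 \<le> x \<bullet> (D i *v x)" for i x
  proof -
    define z where "z = Pinv i *v (L i *v x)"
    have "x \<bullet> (D i *v x) = (Psi i *v z) \<bullet> z" unfolding Dqf z_def Pinv ..
    also have "\<dots> = z \<bullet> (Psi i *v z)" by (rule inner_commute)
    finally show ?thesis using Psi_psd by simp
  qed
  have Dpsd: "psdq (D i)" for i unfolding psdq_def using Dpsd0 by blast
  have Lqf: "x \<bullet> (Lst p G2 P i *v x) = (G2 i *v x) \<bullet> (E i *v (G2 i *v x))" for G2 i x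
    unfolding Lst_def E_def qf_conj ..
  have gen: "x \<bullet> (Cst K2 i *v x) + x \<bullet> (Lst p (Gam A B K2) P i *v x) - x \<bullet> (P i *v x)
      = (K2 i *v x - K i *v x) \<bullet> (Psi i *v (K2 i *v x - K i *v x)) + 2 * ((K2 i *v x - K i *v x) \<bullet> (L i *v x))" for K2 i x
  proof -
    have "x \<bullet> (P i *v x) = x \<bullet> (Cst K i *v x) + x \<bullet> (Lst p G P i *v x)"
      by (subst Psol) (simp add: matrix_vector_mult_add_rdistrib inner_add_right)
    thus ?thesis
      unfolding Lqf G_def Gam_def Cst_def Psi_def L_eq
      using gain_identity[OF sR[of i] Esym[of i], where x=x and Q="Q i" and Kb="K2 i" and A="A i" and B="B i" and K="K i"]
      by simp
  qed
  have fp: "x \<bullet> (Cst Kp i *v x) + x \<bullet> (Lst p Gp P i *v x) - x \<bullet> (P i *v x) = (-(4*eta*(1-eta))) * (x \<bullet> (D i *v x))" for i x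
  proof -
    define y where "y = L i *v x"
    define z where "z = Pinv i *v y"
    have dd: "Kp i *v x - K i *v x = (-(2*eta)) *\<^sub>R z"
      unfolding Kp_def z_def y_def
      by (simp add: matrix_vector_mult_diff_rdistrib scaleR_matrix_vector_assoc[symmetric] matrix_vector_mul_assoc)
    have Pz: "Psi i *v z = y" unfolding z_def by (rule Pinv)
    have Dz: "x \<bullet> (D i *v x) = z \<bullet> y" unfolding Dqf y_def[symmetric] z_def[symmetric] by (rule inner_commute)
    have e1: "Psi i *v ((-(2*eta)) *\<^sub>R z) = (-(2*eta)) *\<^sub>R y"
      by (simp only: matrix_vector_mult_scaleR Pz)
    have e2: "((-(2*eta)) *\<^sub>R z) \<bullet> ((-(2*eta)) *\<^sub>R y) + 2 * (((-(2*eta)) *\<^sub>R z) \<bullet> y)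
        = (4*eta*eta - 4*eta) * (z \<bullet> y)"
      by (simp only: inner_scaleR_left inner_scaleR_right) (simp add: algebra_simps)
    show ?thesis unfolding Gp_def gen dd Dz y_def[symmetric] e1 e2
      by (simp add: algebra_simps)
  qed
  have fs: "-(x \<bullet> (D i *v x)) \<le> x \<bullet> (Cst Kstar i *v x) + x \<bullet> (Lst p Gs P i *v x) - x \<bullet> (P i *v x)" for i x
  proof -
    define y where "y = L i *v x"
    define z where "z = Pinv i *v y"
    define dd where "dd = Kstar i *v x - K i *v x"
    have Pz: "Psi i *v z = y" unfolding z_def by (rule Pinv)
    have Dz: "x \<bullet> (D i *v x) = z \<bullet> y" unfolding Dqf y_def[symmetric] z_def[symmetric] by (rule inner_commute)
    have sw: "z \<bullet> (Psi i *v dd) = dd \<bullet> (Psi i *v z)" by (rule symm_swap[OF Psi_sym])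
    have "0 \<le> (dd + z) \<bullet> (Psi i *v (dd + z))" by (rule Psi_psd)
    also have "\<dots> = dd \<bullet> (Psi i *v dd) + 2 * (dd \<bullet> y) + z \<bullet> y"
      by (simp add: matrix_vector_right_distrib inner_add_left inner_add_right sw Pz)
    finally have "-(z \<bullet> y) \<le> dd \<bullet> (Psi i *v dd) + 2 * (dd \<bullet> y)" by simp
    thus ?thesis unfolding Gs_def gen Dz dd_def[symmetric] y_def[symmetric] .
  qed

  define J where "J G2 V t = Jc M x0 pini p G2 V t" for G2 V t
  have CstK: "(\<lambda>i. Q i + transpose (K2 i) ** R i ** K2 i) = Cst K2" for K2
    by (simp add: Cst_def fun_eq_iff)
  have cost: "mjls_cost M x0 pini p A B Q R K2 = (\<Sum>t. ereal (J (Gam A B K2) (Cst K2) t))" for K2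
    unfolding cost_eq[OF x0_meas x0_sq] J_def Jc_def CstK ..
  have tele_step: "J (Gam A B K2) (Cst K2) t + J (Gam A B K2) P (Suc t)
      = J (Gam A B K2) (\<lambda>j. Cst K2 j + Lst p (Gam A B K2) P j - P j) t + J (Gam A B K2) P t" for K2 t
  proof -
    have "J (Gam A B K2) (Cst K2) t + J (Gam A B K2) P (Suc t) = J (Gam A B K2) (\<lambda>j. Cst K2 j + Lst p (Gam A B K2) P j) t"
      unfolding J_def Jadd J_Suc ..
    also have "(\<lambda>j. Cst K2 j + Lst p (Gam A B K2) P j) = (\<lambda>j. (Cst K2 j + Lst p (Gam A B K2) P j - P j) + P j)"
      by simp
    also have "J (Gam A B K2) \<dots> t = J (Gam A B K2) (\<lambda>j. Cst K2 j + Lst p (Gam A B K2) P j - P j) t + J (Gam A B K2) P t"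
      unfolding J_def by (rule Jadd)
    finally show ?thesis .
  qed
  have tele: "(\<Sum>t<N. J (Gam A B K2) (Cst K2) t) = J (Gam A B K2) P 0 - J (Gam A B K2) P N
      + (\<Sum>t<N. J (Gam A B K2) (\<lambda>j. Cst K2 j + Lst p (Gam A B K2) P j - P j) t)" for K2 N
  proof (induction N)
    case 0 show ?case by simp
  next
    case (Suc N)
    show ?case using Suc tele_step[of K2 N] by (simp add: algebra_simps)
  qed
  have J0: "J G2 V 0 = J G3 V 0" for G2 G3 V unfolding J_def by (rule J_0)
  have fK: "(\<lambda>j. Cst K j + Lst p G P j - P j) = (\<lambda>j. 0 *\<^sub>R P j)"
    using Psol by (simp add: fun_eq_iff)
  have Jzero: "J G (\<lambda>j. 0 *\<^sub>R P j) t = 0" for t unfolding J_def Jscale by simp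
  have partK: "(\<Sum>t<N. J G (Cst K) t) = J G P 0 - J G P N" for N
    using tele[of K N] unfolding G_def[symmetric] fK Jzero by simp
  have "(\<lambda>N. J G P 0 - J G P N) \<longlonglongrightarrow> J G P 0 - 0"
    unfolding J_def by (intro tendsto_intros J_lim0[OF x0_meas x0_sq p_nonneg pini_nn g])
  hence "(\<lambda>t. J G (Cst K) t) sums J G P 0" unfolding sums_def partK by simp
  hence "(\<lambda>t. ereal (J G (Cst K) t)) sums ereal (J G P 0)" by (simp add: sums_ereal)
  hence costK: "mjls_cost M x0 pini p A B Q R K = ereal (J G P 0)"
    unfolding cost G_def[symmetric] by (rule sums_unique[symmetric])
  have sumS: "summable (J Gs (Cst Kstar))"
    unfolding J_def[abs_def] by (rule J_summable[OF x0_meas x0_sq p_nonneg pini_nn gs])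
  define s where "s = suminf (J Gs (Cst Kstar))"
  have costS: "mjls_cost M x0 pini p A B Q R Kstar = ereal s"
    unfolding cost Gs_def[symmetric] s_def by (rule suminf_ereal'[OF sumS])
  define SD where "SD = (\<Sum>i\<in>UNIV. frob (D i) (XK M x0 pini p A B Kstar i))"
  have sumD: "(\<lambda>t. J Gs D t) sums SD"
    unfolding J_def SD_def Gs_def
    by (rule J_XK[OF x0_meas x0_sq p_nonneg pini_nn]) (use gs in \<open>simp add: Gs_def\<close>)
  have fsJ: "- J Gs D t \<le> J Gs (\<lambda>j. Cst Kstar j + Lst p Gs P j - P j) t" for t
  proof -
    have "J Gs (\<lambda>j. (-1) *\<^sub>R D j) t \<le> J Gs (\<lambda>j. Cst Kstar j + Lst p Gs P j - P j) t"
      unfolding J_def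
    proof (rule Jle)
      fix j x
      show "x \<bullet> ((-1) *\<^sub>R D j *v x) \<le> x \<bullet> ((Cst Kstar j + Lst p Gs P j - P j) *v x)"
        using fs[of x j] by (simp add: neg_mv scaleR_matrix_vector_assoc[symmetric] matrix_vector_mult_add_rdistrib
            matrix_vector_mult_diff_rdistrib inner_add_right inner_diff_right)
    qed
    thus ?thesis unfolding J_def Jscale by simp
  qed
  have lowS: "J G P 0 - SD \<le> s"
  proof (rule LIMSEQ_le)
    have "(\<lambda>N. J G P 0 - J Gs P N - (\<Sum>t<N. J Gs D t)) \<longlonglongrightarrow> J G P 0 - 0 - SD"
      using sumD unfolding sums_def J_def
      by (intro tendsto_intros J_lim0[OF x0_meas x0_sq p_nonneg pini_nn gs]) auto
    thus "(\<lambda>N. J G P 0 - J Gs P N - (\<Sum>t<N. J Gs D t)) \<longlonglongrightarrow> J G P 0 - SD" by simp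
    show "(\<lambda>N. \<Sum>t<N. J Gs (Cst Kstar) t) \<longlonglongrightarrow> s"
      unfolding s_def by (rule summable_LIMSEQ[OF sumS])
    show "\<exists>N. \<forall>n\<ge>N. J G P 0 - J Gs P n - (\<Sum>t<n. J Gs D t) \<le> (\<Sum>t<n. J Gs (Cst Kstar) t)"
    proof (intro exI allI impI)
      fix n :: nat
      have "(\<Sum>t<n. J Gs (Cst Kstar) t) = J Gs P 0 - J Gs P n + (\<Sum>t<n. J Gs (\<lambda>j. Cst Kstar j + Lst p Gs P j - P j) t)"
        using tele[of Kstar n] unfolding Gs_def .
      moreover have "(\<Sum>t<n. - J Gs D t) \<le> (\<Sum>t<n. J Gs (\<lambda>j. Cst Kstar j + Lst p Gs P j - P j) t)"
        by (rule sum_mono) (rule fsJ)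
      moreover have "J Gs P 0 = J G P 0" by (rule J0)
      ultimately show "J G P 0 - J Gs P n - (\<Sum>t<n. J Gs D t) \<le> (\<Sum>t<n. J Gs (Cst Kstar) t)"
        by (simp add: sum_negf)
    qed
  qed
  define c where "c = 4 * eta * (1 - eta)"
  have c0: "0 \<le> c" unfolding c_def using eta by simp
  have fpJ: "J Gp (\<lambda>j. Cst Kp j + Lst p Gp P j - P j) t = - c * J Gp D t" for t
  proof -
    have "J Gp (\<lambda>j. Cst Kp j + Lst p Gp P j - P j) t = J Gp (\<lambda>j. (- c) *\<^sub>R D j) t"
      unfolding J_def
    proof (rule Jeq)
      fix j x
      show "x \<bullet> ((Cst Kp j + Lst p Gp P j - P j) *v x) = x \<bullet> ((- c) *\<^sub>R D j *v x)"
        using fp[of x j] unfolding c_def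
        by (simp add: neg_mv scaleR_matrix_vector_assoc[symmetric] matrix_vector_mult_add_rdistrib
            matrix_vector_mult_diff_rdistrib inner_add_right inner_diff_right)
    qed
    thus ?thesis unfolding J_def Jscale by simp
  qed
  define bnd0 where "bnd0 = J G P 0 - c * J G D 0"
  have Dnn: "0 \<le> J G2 D t" for G2 t unfolding J_def by (rule Jnn) (rule Dpsd0)
  have Pnn: "0 \<le> J G2 P t" for G2 t unfolding J_def by (rule Jnn) (rule Ppsd)
  have Cnn: "0 \<le> J G2 (Cst K2) t" for G2 K2 t unfolding J_def by (rule Jnn) (rule Cst_psd)
  have partKp: "(\<Sum>t<N. J Gp (Cst Kp) t) \<le> bnd0" if "N > 0" for N
  proof -
    have eq: "(\<Sum>t<N. J Gp (Cst Kp) t) = J Gp P 0 - J Gp P N - c * (\<Sum>t<N. J Gp D t)"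
      using tele[of Kp N] unfolding Gp_def[symmetric] fpJ by (simp add: sum_distrib_left sum_negf)
    have "J Gp D 0 \<le> (\<Sum>t<N. J Gp D t)"
      using that by (intro member_le_sum[of 0 "{..<N}" "J Gp D"]) (auto intro: Dnn)
    hence "c * J Gp D 0 \<le> c * (\<Sum>t<N. J Gp D t)" by (rule mult_left_mono[OF _ c0])
    moreover have "J Gp P 0 = J G P 0" "J Gp D 0 = J G D 0" by (rule J0)+
    ultimately show ?thesis unfolding eq bnd0_def using Pnn[of Gp N] by simp
  qed
  have costKp: "mjls_cost M x0 pini p A B Q R Kp \<le> ereal bnd0"
    unfolding cost Gp_def[symmetric]
  proof (rule suminf_bound)
    show "\<forall>N. (\<Sum>n<N. ereal (J Gp (Cst Kp) n)) \<le> ereal bnd0"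
    proof
      fix N :: nat
      have "(\<Sum>n<N. J Gp (Cst Kp) n) \<le> bnd0"
      proof (cases "N = 0")
        case True
        have "J Gp (Cst Kp) 0 \<le> bnd0" using partKp[of 1] by simp
        thus ?thesis using True Cnn[of Gp Kp 0] by simp
      next
        case False thus ?thesis using partKp by simp
      qed
      thus "(\<Sum>n<N. ereal (J Gp (Cst Kp) n)) \<le> ereal bnd0" by simp
    qed
    show "0 \<le> ereal (J Gp (Cst Kp) n)" for n using Cnn by simp
  qed
  define TD where "TD = (\<Sum>i\<in>UNIV. frob (D i) (mat 1))"
  have TD0: "0 \<le> TD" unfolding TD_def by (intro sum_nonneg frob_psd_trace_nonneg Dsym Dpsd)
  define mx where "mx = maxnorm (XK M x0 pini p A B Kstar)"
  have mx0: "0 \<le> mx" unfolding mx_def by (rule maxnorm_nonneg)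
  have SDle: "SD \<le> mx * TD"
  proof -
    have "SD \<le> (\<Sum>i\<in>UNIV. mx * frob (D i) (mat 1))"
      unfolding SD_def
    proof (rule sum_mono)
      fix i
      have "frob (D i) (XK M x0 pini p A B Kstar i) \<le> specnorm (XK M x0 pini p A B Kstar i) * frob (D i) (mat 1)"
        by (rule frob_psd_upper[OF Dsym Dpsd specnorm_bound])
      also have "\<dots> \<le> mx * frob (D i) (mat 1)"
        unfolding mx_def by (rule mult_right_mono[OF specnorm_le_maxnorm frob_psd_trace_nonneg[OF Dsym Dpsd]])
      finally show "frob (D i) (XK M x0 pini p A B Kstar i) \<le> mx * frob (D i) (mat 1)" .
    qed
    thus ?thesis unfolding TD_def by (simp add: sum_distrib_left)
  qed
  define sig where "sig = sigma_min S0"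
  have sig0: "0 \<le> sig" unfolding sig_def S0_def by (rule sigma_min_bound(1)[OF x0_pd])
  define mu where "mu = mu_const M x0 pini"
  have mu_eq: "mu = Min (range pini) * sig" unfolding mu_def mu_const_def sig_def S0_def ..
  have minp: "Min (range pini) \<le> pini i" for i by (rule Min_le) auto
  have minp0: "0 < Min (range pini)"
    using Min_in[of "range pini"] pi_pos by auto
  have mu0: "0 \<le> mu" unfolding mu_eq by (rule mult_nonneg_nonneg[OF less_imp_le[OF minp0] sig0])
  have JD0: "mu * TD \<le> J G D 0"
  proof -
    have "mu * TD = (\<Sum>i\<in>UNIV. Min (range pini) * (sig * frob (D i) (mat 1)))"
      unfolding mu_eq TD_def by (simp add: sum_distrib_left mult_ac)
    also have "\<dots> \<le> (\<Sum>i\<in>UNIV. pini i * frob (D i) S0)"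
    proof (rule sum_mono)
      fix i
      have tr0: "0 \<le> frob (D i) (mat 1)" by (rule frob_psd_trace_nonneg[OF Dsym Dpsd])
      have "sig * frob (D i) (mat 1) \<le> frob (D i) S0"
        unfolding sig_def S0_def by (rule frob_psd_lower[OF Dsym Dpsd sigma_min_bound(2)[OF x0_pd]])
      moreover have "Min (range pini) * (sig * frob (D i) (mat 1)) \<le> pini i * (sig * frob (D i) (mat 1))"
        by (rule mult_right_mono[OF minp]) (simp add: sig0 tr0)
      ultimately show "Min (range pini) * (sig * frob (D i) (mat 1)) \<le> pini i * frob (D i) S0"
        using pini_nn[of i] by (meson mult_left_mono order_trans)
    qed
    also have "\<dots> = J G D 0" unfolding J_def Jc_def S0_def by simp
    finally show ?thesis .
  qed
  define a where "a = J G P 0"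
  have real_ineq: "bnd0 - s \<le> (1 - 2 * mu / mx * eta) * (a - s)"
  proof -
    have h1: "2 * eta * J G D 0 \<le> c * J G D 0"
      unfolding c_def using eta Dnn[of G 0] by (intro mult_right_mono) (auto simp: algebra_simps)
    have h2: "2 * eta * (mu * TD) \<le> 2 * eta * J G D 0"
      using eta JD0 by (intro mult_left_mono) auto
    have b: "bnd0 - s \<le> (a - s) - 2 * eta * (mu * TD)"
      unfolding bnd0_def a_def using h1 h2 by linarith
    show ?thesis
    proof (cases "mx = 0")
      case True
      have n: "0 \<le> 2 * eta * (mu * TD)" using eta mu0 TD0 by simp
      have "(1 - 2 * mu / mx * eta) * (a - s) = a - s" using True by simp
      thus ?thesis using b n by linarith
    next
      case False
      hence mxp: "0 < mx" using mx0 by simp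
      have "a - s \<le> mx * TD" using lowS SDle unfolding a_def by linarith
      hence h3: "(a - s) / mx \<le> TD" using mxp by (simp add: divide_le_eq mult.commute)
      have h4: "2 * mu * eta * ((a - s) / mx) \<le> 2 * mu * eta * TD"
        using h3 mu0 eta by (intro mult_left_mono) auto
      have "(1 - 2 * mu / mx * eta) * (a - s) = (a - s) - 2 * mu * eta * ((a - s) / mx)"
        using mxp by (simp add: field_simps)
      thus ?thesis using b h4 by (simp add: mult_ac)
    qed
  qed
  have "mjls_cost M x0 pini p A B Q R Kp - mjls_cost M x0 pini p A B Q R Kstar \<le> ereal bnd0 - ereal s"
    unfolding costS by (rule ereal_minus_mono[OF costKp order_refl])
  also have "\<dots> = ereal (bnd0 - s)" by simp
  also have "\<dots> \<le> ereal ((1 - 2 * mu / mx * eta) * (a - s))" using real_ineq by simp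
  also have "\<dots> = ereal (1 - 2 * mu / mx * eta) * (mjls_cost M x0 pini p A B Q R K - mjls_cost M x0 pini p A B Q R Kstar)"
    unfolding costK costS a_def by simp
  finally show ?thesis unfolding Kp_eq mu_def mx_def .
qed


end
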